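(* In the setting described in the context, there is $M>0$ independent of $\epsilon\in(0,1)$ such that for all $(x,y)\in\mathbb{R}^2$ and $t\ge0$, $$|\rho^\epsilon(x,y,t)|\le\frac{M}{\epsilon^{2\alpha}},\qquad \Big|\frac{\partial\rho^\epsilon}{\partial x}(x,y,t)\Big|,\ \Big|\frac{\partial\rho^\epsilon}{\partial y}(x,y,t)\Big|\le\frac{M}{\epsilon^{3\alpha}}.$$
   Context: Let $\mathcal{C}_b(\mathbb{R}^2)$ be the Banach space of bounded continuous real functions on $\mathbb{R}^2$ with sup norm; for real $u$, $u^+=\max(0,u)$, $u^-=\max(0,-u)$. For $0<\epsilon<1$ let $u^\epsilon,v^\epsilon:\mathbb{R}^2\times[0,\infty)\to\mathbb{R}$ be $2\pi$-periodic in $x$ and in $y$, with $t\mapsto u^\epsilon(\cdot,\cdot,t),v^\epsilon(\cdot,\cdot,t)$ continuous into $\mathcal{C}_b(\mathbb{R}^2)$ and bounded uniformly in $\epsilon,x,y,t$. Let $\rho_0^\epsilon\in\mathcal{C}_b(\mathbb{R}^2)$ be $2\pi$-periodic in each variable with $\sup_\epsilon\int_{[-\pi,\pi]^2}|\rho_0^\epsilon|<\infty$. Let $X^\epsilon$ be the global $\mathcal{C}^1$ solution $[0,\infty)\to\mathcal{C}_b(\mathbb{R}^2)$ of $X^\epsilon(x,y,0)=\rho_0^\epsilon(x,y)$ and $$\frac{d}{dt}X^\epsilon(x,y,t)=\frac1\epsilon\big[(X^\epsilon u^{\epsilon+})(x-\epsilon,y,t)-(X^\epsilon|u^\epsilon|)(x,y,t)+(X^\epsilon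 u^{\epsilon-})(x+\epsilon,y,t)+(X^\epsilon v^{\epsilon+})(x,y-\epsilon,t)-(X^\epsilon|v^\epsilon|)(x,y,t)+(X^\epsilon v^{\epsilon-})(x,y+\epsilon,t)\big].$$ Let $\phi\in\mathcal{C}^\infty(\mathbb{R}^2)$ have compact support with $\int\phi=1$, $\alpha\in]0,1]$, $\phi_{\epsilon^\alpha}(x,y)=\epsilon^{-2\alpha}\phi(x/\epsilon^\alpha,y/\epsilon^\alpha)$, and $\rho^\epsilon(x,y,t)=(X^\epsilon(\cdot,\cdot,t)*\phi_{\epsilon^\alpha})(x,y)$. *)

theory Defs
  imports "HOL-Analysis.Analysis"
begin

text \<open>Smoothness (C-infinity) of a real function on the plane: there is a family S of
functions containing f, closed under taking the two partial derivatives, each member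
being (Frechet) differentiable everywhere with partials in S.\<close>
definition smooth2 :: "(real \<times> real \<Rightarrow> real) \<Rightarrow> bool" where
  "smooth2 f \<longleftrightarrow> (\<exists>S. f \<in> S \<and> (\<forall>g\<in>S. \<exists>gx\<in>S. \<exists>gy\<in>S.
      \<forall>p. (g has_derivative (\<lambda>h. fst h * gx p + snd h * gy p)) (at p)))"

definition periodic2 :: "(real \<times> real \<Rightarrow> real) \<Rightarrow> bool" where
  "periodic2 f \<longleftrightarrow> (\<forall>x y. f (x + 2*pi, y) = f (x, y) \<and> f (x, y + 2*pi) = f (x, y))"

definition mollifier :: "real \<Rightarrow> (real \<times> real \<Rightarrow> real) \<Rightarrow> real \<times> real \<Rightarrow> real" where
  "mollifier \<delta> \<phi> p = \<phi> (fst p / \<delta>, snd p / \<delta>) / \<delta>^2"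

definition conv2 :: "(real \<times> real \<Rightarrow> real) \<Rightarrow> (real \<times> real \<Rightarrow> real) \<Rightarrow> real \<times> real \<Rightarrow> real" where
  "conv2 f g p = integral UNIV (\<lambda>q. f (p - q) * g q)"

definition upwind_rhs :: "real \<Rightarrow> (real \<times> real \<Rightarrow> real) \<Rightarrow> (real \<times> real \<Rightarrow> real)
     \<Rightarrow> (real \<times> real \<Rightarrow> real) \<Rightarrow> real \<Rightarrow> real \<Rightarrow> real" where
  "upwind_rhs \<epsilon> X u v x y = (1/\<epsilon>) *
     ( X (x - \<epsilon>, y) * max 0 (u (x - \<epsilon>, y))
     - X (x, y) * \<bar>u (x, y)\<bar>
     + X (x + \<epsilon>, y) * max 0 (- u (x + \<epsilon>, y))
     + X (x, y - \<epsilon>) * max 0 (v (x, y - \<epsilon>))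
     - X (x, y) * \<bar>v (x, y)\<bar>
     + X (x, y + \<epsilon>) * max 0 (- v (x, y + \<epsilon>)))"

end

theory Submission
  imports Defs
begin






lemma eval_bl: "bounded_linear (\<lambda>f::'a::topological_space \<Rightarrow>\<^sub>C real. apply_bcontfun f p)"
  by (rule bounded_linear_intro[where K=1]) (auto, metis norm_bounded real_norm_def)

lemma abs_eval_le: "\<bar>apply_bcontfun f p\<bar> \<le> norm (f::'a::topological_space \<Rightarrow>\<^sub>C real)"
  by (metis norm_bounded real_norm_def)

lemma per_int_shift:
  fixes h :: "real \<Rightarrow> real"
  assumes per: "\<And>x. h (x + 2*pi) = h x"
  shows "h (x + 2*pi* of_int n) = h x"
proof -
  have nat: "h (y + 2*pi*real m) = h y" for y m
    by (induction m) (auto simp: distrib_left add.assoc[symmetric], metis per add.commute add.assoc)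
  show ?thesis
  proof (cases "n \<ge> 0")
    case True then show ?thesis using nat[of x "nat n"] by simp
  next
    case False
    then have "x = (x + 2*pi* of_int n) + 2*pi*real (nat (-n))" by simp
    then show ?thesis using nat[of "x + 2*pi* of_int n" "nat (-n)"] by metis
  qed
qed

lemma per_int_1d:
  fixes h :: "real \<Rightarrow> real"
  assumes cont: "continuous_on UNIV h" and per: "\<And>x. h (x + 2*pi) = h x"
  shows "integral {a..a+2*pi} h = integral {-pi..pi} h"
proof -
  define n where "n = \<lfloor>(a+pi)/(2*pi)\<rfloor>"
  define b where "b = a - 2*pi* of_int n"
  have n1: "of_int n \<le> (a+pi)/(2*pi)" "(a+pi)/(2*pi) < of_int n + 1"
    unfolding n_def by linarith+
  have b1: "-pi \<le> b" "b < pi" using n1 pi_gt_zero unfolding b_def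
    by (simp_all add: field_simps)
  have hc: "continuous_on S h" for S using cont continuous_on_subset by blast
  have e1: "h \<circ> (\<lambda>x. x + 2*pi* of_int n) = h"
    by (rule ext) (simp add: per_int_shift[of h, OF per])
  have "integral {a..a+2*pi} h = integral {b..b+2*pi} (h \<circ> (\<lambda>x. x + 2*pi* of_int n))"
    using integral_shift[OF hc, of b "b+2*pi" "2*pi* of_int n"] by (simp add: b_def algebra_simps)
  also have "\<dots> = integral {b..b+2*pi} h" by (simp add: e1)
  also have "\<dots> = integral {b..pi} h + integral {pi..b+2*pi} h"
    by (rule Henstock_Kurzweil_Integration.integral_combine[where a=b and c=pi and b="b+2*pi" and f=h, symmetric])
       (use b1 integrable_continuous_real[OF hc] in auto)
  also have "integral {pi..b+2*pi} h = integral {-pi..b} (h \<circ> (\<lambda>x. x + 2*pi))"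
    using integral_shift[OF hc, of "-pi" b "2*pi"] by simp
  also have "h \<circ> (\<lambda>x. x + 2*pi) = h" by (rule ext) (simp add: per)
  then have "integral {-pi..b} (h \<circ> (\<lambda>x. x + 2*pi)) = integral {-pi..b} h" by simp
  also have "integral {b..pi} h + integral {-pi..b} h = integral {-pi..pi} h"
    by (subst add.commute, rule Henstock_Kurzweil_Integration.integral_combine[where a="-pi" and c=b and b=pi and f=h])
       (use b1 integrable_continuous_real[OF hc] in auto)
  finally show ?thesis .
qed

lemma per_int_1d_k:
  fixes h :: "real \<Rightarrow> real"
  assumes cont: "continuous_on UNIV h" and per: "\<And>x. h (x + 2*pi) = h x"
  shows "integral {a..a+2*pi*real k} h = real k * integral {-pi..pi} h"
proof (induction k)
  case 0 then show ?case by simp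
next
  case (Suc k)
  have hc: "continuous_on S h" for S using cont continuous_on_subset by blast
  have "integral {a..a+2*pi*real (Suc k)} h = integral {a..a+2*pi*real k} h + integral {a+2*pi*real k..a+2*pi*real k + 2*pi} h"
    by (rule Henstock_Kurzweil_Integration.integral_combine[where a=a and c="a+2*pi*real k" and b="a+2*pi*real (Suc k)" and f=h, symmetric, THEN trans])
       (use integrable_continuous_real[OF hc] in \<open>auto simp: algebra_simps\<close>)
  then show ?case using Suc per_int_1d[OF cont per, of "a+2*pi*real k"] by (simp add: algebra_simps)
qed

lemma fubini2:
  fixes g :: "real \<times> real \<Rightarrow> real"
  assumes cont: "continuous_on UNIV g"
  shows "integral (cbox (c1,c2) (d1,d2)) g = integral {c1..d1} (\<lambda>x. integral {c2..d2} (\<lambda>y. g(x,y)))"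
  using integral_prod_continuous[OF continuous_on_subset[OF cont], of c1 c2 d1 d2] by simp

lemma cont_slice1: "continuous_on UNIV g \<Longrightarrow> continuous_on UNIV (\<lambda>y. g (x::real, y::real))"
  by (rule continuous_on_compose2[of UNIV g]) (auto intro!: continuous_intros)

lemma per_box:
  fixes g :: "real \<times> real \<Rightarrow> real"
  assumes cont: "continuous_on UNIV g" and per: "periodic2 g"
  shows "integral (cbox (a1,a2) (a1+2*pi*real k, a2+2*pi*real k)) g
     = real k ^ 2 * integral (cbox (-pi,-pi) (pi,pi)) g"
proof -
  define G where "G x = integral {-pi..pi} (\<lambda>y. g(x,y))" for x
  have inner: "integral {a2..a2+2*pi*real k} (\<lambda>y. g(x,y)) = real k * G x" for x
    unfolding G_def
    by (rule per_int_1d_k[OF cont_slice1[OF cont]]) (use per in \<open>simp add: periodic2_def\<close>)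
  have Gc: "continuous_on UNIV G"
    unfolding G_def
    by (rule integral_continuous_on_param[where a="-pi" and b=pi, simplified])
       (use continuous_on_subset[OF cont, of "UNIV \<times> {-pi..pi}"] in \<open>simp add: case_prod_beta'\<close>)
  have Gp: "G (x + 2*pi) = G x" for x
    unfolding G_def using per by (simp add: periodic2_def)
  have "integral (cbox (a1,a2) (a1+2*pi*real k, a2+2*pi*real k)) g
      = integral {a1..a1+2*pi*real k} (\<lambda>x. real k * G x)"
    by (simp add: fubini2[OF cont] inner)
  also have "\<dots> = real k * (real k * integral {-pi..pi} G)"
    by (simp add: per_int_1d_k[OF Gc Gp])
  also have "integral {-pi..pi} G = integral (cbox (-pi,-pi) (pi,pi)) g"
  proof -
    have "G = (\<lambda>x. integral {-pi..pi} (\<lambda>y. g(x,y)))" by (rule ext) (simp add: G_def)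
    then show ?thesis by (simp add: fubini2[OF cont])
  qed
  finally show ?thesis by (simp add: power2_eq_square)
qed

lemma per_shift:
  fixes g :: "real \<times> real \<Rightarrow> real"
  assumes cont: "continuous_on UNIV g" and per: "periodic2 g"
  shows "integral (cbox (-pi,-pi) (pi,pi)) (\<lambda>p. g (p - c)) = integral (cbox (-pi,-pi) (pi,pi)) g"
proof -
  have "integral (cbox (-pi,-pi) (pi,pi)) (\<lambda>p. g (p - c)) = integral (cbox ((-pi,-pi) - c) ((pi,pi) - c)) g"
    using integral_shift_cbox[of "(-pi,-pi) - c" "-c" "(pi,pi) - c" g] by simp
  also have "\<dots> = integral (cbox (-pi,-pi) (pi,pi)) g"
    using per_box[OF cont per, of "-pi - fst c" "-pi - snd c" 1] by (cases c) (simp add: algebra_simps)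
  finally show ?thesis .
qed


lemma dini_mono:
  fixes N :: "real \<Rightarrow> real"
  assumes cont: "continuous_on {0..} N"
    and dini: "\<And>t \<eta>. 0 \<le> t \<Longrightarrow> 0 < \<eta> \<Longrightarrow> \<exists>h0>0. \<forall>h. 0 < h \<and> h < h0 \<longrightarrow> N (t+h) \<le> N t + \<eta> * h"
    and T: "0 \<le> T"
  shows "N T \<le> N 0"
proof -
  have key: "N T \<le> N 0 + \<eta> * T" if eta: "0 < \<eta>" for \<eta>
  proof (rule ccontr)
    assume neg: "\<not> N T \<le> N 0 + \<eta> * T"
    define A where "A = {s \<in> {0..T}. N s \<le> N 0 + \<eta> * s}"
    have cT: "continuous_on {0..T} N" using continuous_on_subset[OF cont] by auto
    have clA: "closed A" unfolding A_def
      by (rule continuous_on_closed_Collect_le[OF cT]) (auto intro!: continuous_intros)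
    have A0: "0 \<in> A" using T by (simp add: A_def)
    have bA: "bdd_above A" unfolding A_def by (auto intro: bdd_aboveI[where M=T])
    define s1 where "s1 = Sup A"
    have s1A: "s1 \<in> A" unfolding s1_def using closed_contains_Sup[OF _ bA clA] A0 by blast
    then have s1: "0 \<le> s1" "s1 \<le> T" "N s1 \<le> N 0 + \<eta> * s1" by (auto simp: A_def)
    have "s1 \<noteq> T" using s1 neg by auto
    with s1 have s1T: "s1 < T" by simp
    obtain h0 where h0: "h0 > 0" "\<And>h. 0 < h \<and> h < h0 \<Longrightarrow> N (s1+h) \<le> N s1 + (\<eta>/2) * h"
      using dini[OF s1(1), of "\<eta>/2"] eta by auto
    define h where "h = min (h0/2) (T - s1)"
    have h: "0 < h" "h < h0" "s1 + h \<le> T" using h0 s1T by (auto simp: h_def)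
    have "N (s1+h) \<le> N 0 + \<eta> * (s1 + h)"
    proof -
      have a: "(\<eta>/2)*h \<le> \<eta>*h" using eta h by simp
      have b: "N (s1+h) \<le> N s1 + (\<eta>/2) * h" using h0(2)[of h] h by simp
      show ?thesis using a b s1(3) by (simp add: distrib_left)
    qed
    then have "s1 + h \<in> A" using h s1 by (auto simp: A_def)
    then have "s1 + h \<le> s1" unfolding s1_def by (rule cSup_upper[OF _ bA])
    then show False using h by simp
  qed
  show ?thesis
  proof (rule ccontr)
    assume "\<not> N T \<le> N 0"
    then have d: "N T - N 0 > 0" by simp
    define \<eta> where "\<eta> = (N T - N 0) / (2 * (T + 1))"
    have "\<eta> > 0" using d T by (simp add: \<eta>_def)
    from key[OF this] have "N T - N 0 \<le> \<eta> * T" by simp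
    also have "\<eta> * T < N T - N 0"
    proof -
      have "(T+2)*(N T - N 0) > 0" using d T by simp
      then show ?thesis using d T unfolding \<eta>_def by (simp add: field_simps)
    qed
    finally show False by simp
  qed
qed


lemma gronwall0:
  fixes y y' :: "'q \<Rightarrow> real \<Rightarrow> real"
  assumes deriv: "\<And>q t. 0 \<le> t \<Longrightarrow> (y q has_field_derivative y' q t) (at t within {0..})"
    and bnd: "\<And>t m q. 0 \<le> t \<Longrightarrow> (\<forall>r. \<bar>y r t\<bar> \<le> m) \<Longrightarrow> \<bar>y' q t\<bar> \<le> K * m"
    and init: "\<And>q. y q 0 = 0"
    and bdd: "\<And>T. \<exists>M. \<forall>q t. 0 \<le> t \<and> t \<le> T \<longrightarrow> \<bar>y q t\<bar> \<le> M"
    and K: "K \<ge> 0" and t: "0 \<le> t"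
  shows "y q t = 0"
proof -
  define h where "h = 1 / (2*K+2)"
  have h: "h > 0" "K * h \<le> 1/2" using K by (auto simp: h_def field_simps)
  have step: "\<forall>q t. 0 \<le> t \<and> t \<le> real j * h \<longrightarrow> y q t = 0" for j
  proof (induction j)
    case 0 then show ?case using init by auto
  next
    case (Suc j)
    note IHj = Suc.IH
    define s where "s = real j * h"
    have s: "0 \<le> s" using h by (simp add: s_def)
    obtain M0 where M0: "\<forall>q t. 0 \<le> t \<and> t \<le> s + h \<longrightarrow> \<bar>y q t\<bar> \<le> M0" using bdd by blast
    define M where "M = max M0 0"
    have M: "\<forall>q t. 0 \<le> t \<and> t \<le> s + h \<longrightarrow> \<bar>y q t\<bar> \<le> M" "M \<ge> 0" using M0 unfolding M_def by (meson max.coboundedI1, simp)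
    have dec: "\<forall>q t. 0 \<le> t \<and> t \<le> s + h \<longrightarrow> \<bar>y q t\<bar> \<le> M / 2^n" for n
    proof (induction n)
      case 0 then show ?case using M by simp
    next
      case (Suc n)
      show ?case
      proof (intro allI impI)
        fix q t assume tt: "0 \<le> t \<and> t \<le> s + h"
        show "\<bar>y q t\<bar> \<le> M / 2 ^ Suc n"
        proof (cases "t \<le> s")
          case True
          then have "y q t = 0" using IHj tt by (simp add: s_def)
          then show ?thesis using M(2) by simp
        next
          case False
          have ys: "y q s = 0" using IHj s by (simp add: s_def) 
          have "norm (y q t - y q s) \<le> (K * (M / 2^n)) * norm (t - s)"
          proof (rule field_differentiable_bound[where S="{s..t}" and f="y q" and f'="y' q"])
            show "convex {s..t}" by simp
            show "(y q has_field_derivative y' q z) (at z within {s..t})" if "z \<in> {s..t}" for z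
              using deriv[of z q] that s by (auto intro: has_field_derivative_subset)
            show "norm (y' q z) \<le> K * (M / 2^n)" if "z \<in> {s..t}" for z
              using bnd[of z "M/2^n" q] that s tt Suc.IH by auto
          qed (use False in auto)
          also have "\<dots> \<le> (K * (M / 2^n)) * h" using False tt K M(2)
            by (intro mult_left_mono) auto
          also have "\<dots> = (K * h) * (M / 2^n)" by simp
          also have "\<dots> \<le> (1/2) * (M / 2^n)" using h M(2) by (intro mult_right_mono) auto
          finally show ?thesis using ys by simp
        qed
      qed
    qed
    show ?case
    proof (intro allI impI)
      fix q t assume tt: "0 \<le> t \<and> t \<le> real (Suc j) * h"
      then have tt': "0 \<le> t \<and> t \<le> s + h" by (simp add: s_def algebra_simps)
      have "\<bar>y q t\<bar> \<le> 0"
      proof (rule field_le_epsilon)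
        fix e :: real assume e: "e > 0"
        obtain n where "M / 2^n < e"
        proof -
          obtain n where "M / e < 2^n" using real_arch_pow[of 2 "M/e"] by auto
          then have "M / 2^n < e" using e by (simp add: field_simps)
          then show ?thesis using that by blast
        qed
        moreover have "\<bar>y q t\<bar> \<le> M/2^n" using dec[of n] tt' by blast
        ultimately show "\<bar>y q t\<bar> \<le> 0 + e" by simp
      qed
      then show "y q t = 0" by simp
    qed
  qed
  obtain j where "t / h \<le> real j" using real_arch_simple by blast
  then have "t \<le> real j * h" using h by (simp add: field_simps)
  then show ?thesis using step t by blast
qed


lemma upwind_shift:
  assumes U: "\<And>x y. U (x + c1, y + c2) = U (x,y)" and V: "\<And>x y. V (x + c1, y + c2) = V (x,y)"
  shows "upwind_rhs \<epsilon> X U V (x+c1) (y+c2) - upwind_rhs \<epsilon> X U V x y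
       = upwind_rhs \<epsilon> (\<lambda>p. X (fst p + c1, snd p + c2) - X p) U V x y"
proof -
  have e: "x + c1 - \<epsilon> = (x - \<epsilon>) + c1" "x + c1 + \<epsilon> = (x + \<epsilon>) + c1"
          "y + c2 - \<epsilon> = (y - \<epsilon>) + c2" "y + c2 + \<epsilon> = (y + \<epsilon>) + c2" by simp_all
  show ?thesis
    unfolding upwind_rhs_def
    apply (simp only: e U V fst_conv snd_conv)
    apply (simp add: algebra_simps)
    done
qed


lemma term_bound:
  fixes a b m B :: real
  assumes a: "\<bar>a\<bar> \<le> m" and b: "\<bar>b\<bar> \<le> B"
  shows "\<bar>a * max 0 b\<bar> \<le> m * B" "\<bar>a * max 0 (-b)\<bar> \<le> m * B" "\<bar>a * \<bar>b\<bar>\<bar> \<le> m * B"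
proof -
  have m: "m \<ge> 0" using a abs_ge_zero order_trans by blast
  have b1: "\<bar>max 0 b\<bar> \<le> B" "\<bar>max 0 (-b)\<bar> \<le> B" "\<bar>\<bar>b\<bar>\<bar> \<le> B" using b by linarith+
  show "\<bar>a * max 0 b\<bar> \<le> m * B" unfolding abs_mult by (rule mult_mono[OF a b1(1) m abs_ge_zero])
  show "\<bar>a * max 0 (-b)\<bar> \<le> m * B" unfolding abs_mult by (rule mult_mono[OF a b1(2) m abs_ge_zero])
  show "\<bar>a * \<bar>b\<bar>\<bar> \<le> m * B" unfolding abs_mult by (rule mult_mono[OF a b1(3) m abs_ge_zero])
qed

lemma upwind_bound:
  fixes Y U V :: "real \<times> real \<Rightarrow> real"
  assumes eps: "0 < \<epsilon>" and U: "\<And>p. \<bar>U p\<bar> \<le> B" and V: "\<And>p. \<bar>V p\<bar> \<le> B"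
    and Y: "\<And>p. \<bar>Y p\<bar> \<le> m"
  shows "\<bar>upwind_rhs \<epsilon> Y U V x y\<bar> \<le> 6 * B / \<epsilon> * m"
proof -
  define S where "S = Y (x - \<epsilon>, y) * max 0 (U (x - \<epsilon>, y))
     - Y (x, y) * \<bar>U (x, y)\<bar>
     + Y (x + \<epsilon>, y) * max 0 (- U (x + \<epsilon>, y))
     + Y (x, y - \<epsilon>) * max 0 (V (x, y - \<epsilon>))
     - Y (x, y) * \<bar>V (x, y)\<bar>
     + Y (x, y + \<epsilon>) * max 0 (- V (x, y + \<epsilon>))"
  have "\<bar>S\<bar> \<le> 6 * (m * B)"
  proof -
    note t1 = term_bound[OF Y U]
    note t2 = term_bound[OF Y V]
    have "S \<le> 6 * (m * B)" "- S \<le> 6 * (m * B)" unfolding S_def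
      using t1[of "(x - \<epsilon>, y)" "(x - \<epsilon>, y)", THEN abs_le_D1] t1[of "(x - \<epsilon>, y)" "(x - \<epsilon>, y)", THEN abs_le_D2]
        t1[of "(x, y)" "(x, y)", THEN abs_le_D1] t1[of "(x, y)" "(x, y)", THEN abs_le_D2]
        t1[of "(x + \<epsilon>, y)" "(x + \<epsilon>, y)", THEN abs_le_D1] t1[of "(x + \<epsilon>, y)" "(x + \<epsilon>, y)", THEN abs_le_D2]
        t2[of "(x, y - \<epsilon>)" "(x, y - \<epsilon>)", THEN abs_le_D1] t2[of "(x, y - \<epsilon>)" "(x, y - \<epsilon>)", THEN abs_le_D2]
        t2[of "(x, y)" "(x, y)", THEN abs_le_D1] t2[of "(x, y)" "(x, y)", THEN abs_le_D2]
        t2[of "(x, y + \<epsilon>)" "(x, y + \<epsilon>)", THEN abs_le_D1] t2[of "(x, y + \<epsilon>)" "(x, y + \<epsilon>)", THEN abs_le_D2]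
      by linarith+
    then show ?thesis by linarith
  qed
  then have "\<bar>(1/\<epsilon>) * S\<bar> \<le> (1/\<epsilon>) * (6 * (m * B))"
    using eps by (simp add: abs_mult divide_right_mono)
  then show ?thesis unfolding upwind_rhs_def S_def[symmetric] by (simp add: field_simps)
qed


lemma upwind_L1_pointwise:
  fixes X U V :: "real \<times> real \<Rightarrow> real"
  assumes eps: "0 < \<epsilon>" and h: "0 \<le> h" and hB: "h * (\<bar>U (x,y)\<bar> + \<bar>V (x,y)\<bar>) \<le> \<epsilon>"
  shows "\<bar>X (x,y) + h * upwind_rhs \<epsilon> X U V x y\<bar> \<le> \<bar>X (x,y)\<bar>
     - (h/\<epsilon>) * (\<bar>X (x,y)\<bar> * \<bar>U (x,y)\<bar> + \<bar>X (x,y)\<bar> * \<bar>V (x,y)\<bar>)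
     + (h/\<epsilon>) * (\<bar>X (x-\<epsilon>,y)\<bar> * max 0 (U (x-\<epsilon>,y)) + \<bar>X (x+\<epsilon>,y)\<bar> * max 0 (- U (x+\<epsilon>,y))
        + \<bar>X (x,y-\<epsilon>)\<bar> * max 0 (V (x,y-\<epsilon>)) + \<bar>X (x,y+\<epsilon>)\<bar> * max 0 (- V (x,y+\<epsilon>)))"
proof -
  define k where "k = h / \<epsilon>"
  have k: "k \<ge> 0" using h eps by (simp add: k_def)
  define c where "c = 1 - k * (\<bar>U (x,y)\<bar> + \<bar>V (x,y)\<bar>)"
  have c: "c \<ge> 0" using hB eps unfolding c_def k_def by (simp add: field_simps)
  define A1 where "A1 = X (x-\<epsilon>,y) * max 0 (U (x-\<epsilon>,y))"
  define A2 where "A2 = X (x+\<epsilon>,y) * max 0 (- U (x+\<epsilon>,y))"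
  define A3 where "A3 = X (x,y-\<epsilon>) * max 0 (V (x,y-\<epsilon>))"
  define A4 where "A4 = X (x,y+\<epsilon>) * max 0 (- V (x,y+\<epsilon>))"
  have eq: "X (x,y) + h * upwind_rhs \<epsilon> X U V x y = c * X (x,y) + k * A1 + k * A2 + k * A3 + k * A4"
    unfolding upwind_rhs_def c_def k_def A1_def A2_def A3_def A4_def using eps
    by (simp add: field_simps)
  have "\<bar>c * X (x,y) + k * A1 + k * A2 + k * A3 + k * A4\<bar>
      \<le> \<bar>c * X (x,y)\<bar> + \<bar>k * A1\<bar> + \<bar>k * A2\<bar> + \<bar>k * A3\<bar> + \<bar>k * A4\<bar>"
    by (meson abs_triangle_ineq add_mono order_trans order_refl)
  also have "\<dots> = c * \<bar>X (x,y)\<bar> + k * \<bar>A1\<bar> + k * \<bar>A2\<bar> + k * \<bar>A3\<bar> + k * \<bar>A4\<bar>"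
    using c k by (simp add: abs_mult)
  also have "\<dots> = \<bar>X (x,y)\<bar>
     - (h/\<epsilon>) * (\<bar>X (x,y)\<bar> * \<bar>U (x,y)\<bar> + \<bar>X (x,y)\<bar> * \<bar>V (x,y)\<bar>)
     + (h/\<epsilon>) * (\<bar>X (x-\<epsilon>,y)\<bar> * max 0 (U (x-\<epsilon>,y)) + \<bar>X (x+\<epsilon>,y)\<bar> * max 0 (- U (x+\<epsilon>,y))
        + \<bar>X (x,y-\<epsilon>)\<bar> * max 0 (V (x,y-\<epsilon>)) + \<bar>X (x,y+\<epsilon>)\<bar> * max 0 (- V (x,y+\<epsilon>)))"
    unfolding c_def k_def A1_def A2_def A3_def A4_def abs_mult by (simp add: algebra_simps)
  finally show ?thesis using eq by simp
qed

lemma cont_comp: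
  "continuous_on UNIV f \<Longrightarrow> continuous_on S g \<Longrightarrow> continuous_on S (\<lambda>p. f (g p))"
  by (rule continuous_on_compose2[of UNIV f S g]) auto


lemma per_shift2:
  fixes g :: "real \<times> real \<Rightarrow> real"
  assumes cont: "continuous_on UNIV g" and per: "periodic2 g"
  shows "integral (cbox (-pi,-pi) (pi,pi)) (\<lambda>p. g (fst p - c1, snd p - c2)) = integral (cbox (-pi,-pi) (pi,pi)) g"
proof -
  have "(\<lambda>p. g (fst p - c1, snd p - c2)) = (\<lambda>p. g (p - (c1,c2)))" by (auto simp: fun_eq_iff)
  then show ?thesis using per_shift[OF cont per, of "(c1,c2)"] by simp
qed

lemma per_mult: "periodic2 f \<Longrightarrow> periodic2 g \<Longrightarrow> periodic2 (\<lambda>p. f p * g p)"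
  by (simp add: periodic2_def)
lemma per_comp: "periodic2 f \<Longrightarrow> periodic2 (\<lambda>p. h (f p))"
  by (simp add: periodic2_def)

lemma L1_step:
  fixes Xf U V :: "real \<times> real \<Rightarrow> real"
  assumes eps: "0 < \<epsilon>" and h: "0 \<le> h" and Ub: "\<And>p. \<bar>U p\<bar> \<le> B" and Vb: "\<And>p. \<bar>V p\<bar> \<le> B"
    and hB: "h * (2 * B) \<le> \<epsilon>"
    and Xc: "continuous_on UNIV Xf" and Uc: "continuous_on UNIV U" and Vc: "continuous_on UNIV V"
    and Xp: "periodic2 Xf" and Up: "periodic2 U" and Vp: "periodic2 V"
  shows "integral (cbox (-pi,-pi) (pi,pi)) (\<lambda>p. \<bar>Xf p + h * upwind_rhs \<epsilon> Xf U V (fst p) (snd p)\<bar>)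
    \<le> integral (cbox (-pi,-pi) (pi,pi)) (\<lambda>p. \<bar>Xf p\<bar>)"
proof -
  let ?Q = "cbox (-pi,-pi) (pi,pi) :: (real \<times> real) set"
  define k where "k = h / \<epsilon>"
  define a where "a p = \<bar>Xf p\<bar>" for p
  define G1 where "G1 p = a p * \<bar>U p\<bar>" for p
  define G2 where "G2 p = a p * \<bar>V p\<bar>" for p
  define F1 where "F1 p = a p * max 0 (U p)" for p
  define F2 where "F2 p = a p * max 0 (- U p)" for p
  define F3 where "F3 p = a p * max 0 (V p)" for p
  define F4 where "F4 p = a p * max 0 (- V p)" for p
  have ac: "continuous_on UNIV a" unfolding a_def by (intro continuous_intros Xc)
  have ap: "periodic2 a" unfolding a_def using per_comp[OF Xp] by simp
  have cG1: "continuous_on UNIV G1" unfolding G1_def by (intro continuous_intros ac Uc)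
  have cG2: "continuous_on UNIV G2" unfolding G2_def by (intro continuous_intros ac Vc)
  have cF1: "continuous_on UNIV F1" unfolding F1_def by (intro continuous_intros ac Uc)
  have cF2: "continuous_on UNIV F2" unfolding F2_def by (intro continuous_intros ac Uc)
  have cF3: "continuous_on UNIV F3" unfolding F3_def by (intro continuous_intros ac Vc)
  have cF4: "continuous_on UNIV F4" unfolding F4_def by (intro continuous_intros ac Vc)
  have pF1: "periodic2 F1" using ap Up unfolding F1_def periodic2_def by simp
  have pF2: "periodic2 F2" using ap Up unfolding F2_def periodic2_def by simp
  have pF3: "periodic2 F3" using ap Vp unfolding F3_def periodic2_def by simp
  have pF4: "periodic2 F4" using ap Vp unfolding F4_def periodic2_def by simp
  have int: "f integrable_on ?Q" if "continuous_on UNIV f" for f :: "real \<times> real \<Rightarrow> real"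
    by (rule integrable_continuous[OF continuous_on_subset[OF that]]) auto
  have hs: "((\<lambda>p. F (fst p - c1, snd p - c2)) has_integral integral ?Q F) ?Q"
    if "continuous_on UNIV F" "periodic2 F" for F c1 c2
  proof -
    have "continuous_on UNIV (\<lambda>p. F (fst p - c1, snd p - c2))"
      by (intro cont_comp[OF that(1)] continuous_intros)
    from integrable_integral[OF int[OF this]] show ?thesis using per_shift2[OF that, of c1 c2] by simp
  qed
  have hi: "(f has_integral integral ?Q f) ?Q" if "continuous_on UNIV f" for f :: "real \<times> real \<Rightarrow> real"
    using int[OF that] by (simp add: has_integral_integral)
  define R where "R p = a p - k * (G1 p + G2 p) + k * (F1 (fst p - \<epsilon>, snd p) + F2 (fst p - (-\<epsilon>), snd p)
      + F3 (fst p, snd p - \<epsilon>) + F4 (fst p, snd p - (-\<epsilon>)))" for p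
  have hR: "(R has_integral integral ?Q a - k * (integral ?Q G1 + integral ?Q G2) + k * (integral ?Q F1 + integral ?Q F2
      + integral ?Q F3 + integral ?Q F4)) ?Q"
  proof -
    note i1 = hs[OF cF1 pF1, of \<epsilon> 0] and i2 = hs[OF cF2 pF2, of "-\<epsilon>" 0]
      and i3 = hs[OF cF3 pF3, of 0 \<epsilon>] and i4 = hs[OF cF4 pF4, of 0 "-\<epsilon>"]
    have iF: "((\<lambda>p. F1 (fst p - \<epsilon>, snd p) + F2 (fst p - (-\<epsilon>), snd p)
      + F3 (fst p, snd p - \<epsilon>) + F4 (fst p, snd p - (-\<epsilon>))) has_integral
       (integral ?Q F1 + integral ?Q F2 + integral ?Q F3 + integral ?Q F4)) ?Q"
      using has_integral_add[OF has_integral_add[OF has_integral_add[OF i1 i2] i3] i4] by simp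
    have iG: "((\<lambda>p. G1 p + G2 p) has_integral (integral ?Q G1 + integral ?Q G2)) ?Q"
      by (rule has_integral_add[OF hi[OF cG1] hi[OF cG2]])
    show ?thesis unfolding R_def
      by (rule has_integral_add[OF has_integral_diff[OF hi[OF ac] has_integral_mult_right[OF iG]] has_integral_mult_right[OF iF]])
  qed
  have maxabs: "max 0 u + max 0 (-u) = \<bar>u\<bar>" for u :: real by linarith
  have e1: "integral ?Q F1 + integral ?Q F2 = integral ?Q G1"
  proof -
    have "integral ?Q F1 + integral ?Q F2 = integral ?Q (\<lambda>p. F1 p + F2 p)"
      by (rule Henstock_Kurzweil_Integration.integral_add[symmetric]) (intro int cF1 cF2)+
    also have "(\<lambda>p. F1 p + F2 p) = G1" unfolding F1_def F2_def G1_def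
      by (rule ext) (simp only: distrib_left[symmetric] maxabs)
    finally show ?thesis .
  qed
  have e2: "integral ?Q F3 + integral ?Q F4 = integral ?Q G2"
  proof -
    have "integral ?Q F3 + integral ?Q F4 = integral ?Q (\<lambda>p. F3 p + F4 p)"
      by (rule Henstock_Kurzweil_Integration.integral_add[symmetric]) (intro int cF3 cF4)+
    also have "(\<lambda>p. F3 p + F4 p) = G2" unfolding F3_def F4_def G2_def
      by (rule ext) (simp only: distrib_left[symmetric] maxabs)
    finally show ?thesis .
  qed
  have "integral ?Q (\<lambda>p. \<bar>Xf p + h * upwind_rhs \<epsilon> Xf U V (fst p) (snd p)\<bar>) \<le> integral ?Q R"
  proof (rule Henstock_Kurzweil_Integration.integral_le)
    show "(\<lambda>p. \<bar>Xf p + h * upwind_rhs \<epsilon> Xf U V (fst p) (snd p)\<bar>) integrable_on ?Q"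
      by (rule int) (unfold upwind_rhs_def, intro continuous_intros cont_comp[OF Xc] cont_comp[OF Uc] cont_comp[OF Vc])
    show "R integrable_on ?Q" using hR by blast
    show "\<bar>Xf p + h * upwind_rhs \<epsilon> Xf U V (fst p) (snd p)\<bar> \<le> R p" for p
    proof -
      have hb: "h * (\<bar>U (fst p, snd p)\<bar> + \<bar>V (fst p, snd p)\<bar>) \<le> \<epsilon>"
      proof -
        have "h * (\<bar>U (fst p, snd p)\<bar> + \<bar>V (fst p, snd p)\<bar>) \<le> h * (2*B)"
        proof (rule mult_left_mono[OF _ h])
          have "\<bar>U (fst p, snd p)\<bar> \<le> B" "\<bar>V (fst p, snd p)\<bar> \<le> B" by (rule Ub, rule Vb)
          then show "\<bar>U (fst p, snd p)\<bar> + \<bar>V (fst p, snd p)\<bar> \<le> 2 * B" by linarith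
        qed
        then show ?thesis using hB by linarith
      qed
      show ?thesis using upwind_L1_pointwise[where X=Xf and U=U and V=V and x="fst p" and y="snd p", OF eps h hb]
        unfolding R_def a_def G1_def G2_def F1_def F2_def F3_def F4_def k_def by simp
    qed
  qed
  also have "integral ?Q R = integral ?Q a"
  proof -
    have "integral ?Q F1 + integral ?Q F2 + integral ?Q F3 + integral ?Q F4 = integral ?Q G1 + integral ?Q G2"
      using e1 e2 by linarith
    then show ?thesis using integral_unique[OF hR] by simp
  qed
  finally show ?thesis unfolding a_def .
qed
lemma X_cont:
  fixes X X' :: "real \<Rightarrow> ((real \<times> real) \<Rightarrow>\<^sub>C real)"
  assumes Xd: "\<And>t. 0 \<le> t \<Longrightarrow> (X has_vector_derivative X' t) (at t within {0..})"
  shows "continuous_on {0..} X"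
  unfolding continuous_on_eq_continuous_within
  by (auto intro: has_vector_derivative_continuous[OF Xd])

lemma X_bdd:
  fixes X X' :: "real \<Rightarrow> ((real \<times> real) \<Rightarrow>\<^sub>C real)"
  assumes Xd: "\<And>t. 0 \<le> t \<Longrightarrow> (X has_vector_derivative X' t) (at t within {0..})"
  shows "\<exists>M. \<forall>t. 0 \<le> t \<and> t \<le> T \<longrightarrow> norm (X t) \<le> M"
proof -
  have "compact (X ` {0..T})"
    by (rule compact_continuous_image[OF continuous_on_subset[OF X_cont[OF Xd]]]) auto
  then obtain M where "\<forall>z\<in>X ` {0..T}. norm z \<le> M" using compact_imp_bounded bounded_iff by metis
  then have "\<forall>t. 0 \<le> t \<and> t \<le> T \<longrightarrow> norm (X t) \<le> M" by simp
  then show ?thesis by blast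
qed

lemma X_shift:
  fixes X X' u v :: "real \<Rightarrow> ((real \<times> real) \<Rightarrow>\<^sub>C real)"
  assumes eps: "0 < \<epsilon>"
    and Xd: "\<And>t. 0 \<le> t \<Longrightarrow> (X has_vector_derivative X' t) (at t within {0..})"
    and Xe: "\<And>t x y. 0 \<le> t \<Longrightarrow> apply_bcontfun (X' t) (x, y) = upwind_rhs \<epsilon> (apply_bcontfun (X t))
                     (apply_bcontfun (u t)) (apply_bcontfun (v t)) x y"
    and Bd: "\<And>t p. 0 \<le> t \<Longrightarrow> \<bar>apply_bcontfun (u t) p\<bar> \<le> B \<and> \<bar>apply_bcontfun (v t) p\<bar> \<le> B"
    and up: "\<And>t x y. 0 \<le> t \<Longrightarrow> apply_bcontfun (u t) (x + c1, y + c2) = apply_bcontfun (u t) (x, y)"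
    and vp: "\<And>t x y. 0 \<le> t \<Longrightarrow> apply_bcontfun (v t) (x + c1, y + c2) = apply_bcontfun (v t) (x, y)"
    and X0: "\<And>x y. apply_bcontfun (X 0) (x + c1, y + c2) = apply_bcontfun (X 0) (x, y)"
    and t: "0 \<le> t"
  shows "apply_bcontfun (X t) (x + c1, y + c2) = apply_bcontfun (X t) (x, y)"
proof -
  have B: "B \<ge> 0" using Bd[of 0 0] abs_ge_zero order_trans by auto
  define Y where "Y q s = apply_bcontfun (X s) (fst q + c1, snd q + c2) - apply_bcontfun (X s) q" for q s
  define Y' where "Y' q s = apply_bcontfun (X' s) (fst q + c1, snd q + c2) - apply_bcontfun (X' s) q" for q s
  have "Y (x,y) t = 0"
  proof (rule gronwall0[where K="6*B/\<epsilon>" and y=Y and y'=Y'])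
    show "(Y q has_field_derivative Y' q s) (at s within {0..})" if "0 \<le> s" for q s
      unfolding has_real_derivative_iff_has_vector_derivative Y_def Y'_def
      by (intro has_vector_derivative_diff bounded_linear.has_vector_derivative[OF eval_bl Xd[OF that]])
    show "\<bar>Y' q s\<bar> \<le> 6 * B / \<epsilon> * m" if s: "0 \<le> s" and m: "\<forall>r. \<bar>Y r s\<bar> \<le> m" for s m q
    proof -
      have "Y' q s = upwind_rhs \<epsilon> (\<lambda>p. Y p s) (apply_bcontfun (u s)) (apply_bcontfun (v s)) (fst q) (snd q)"
      proof -
        have yy: "(\<lambda>p. Y p s) = (\<lambda>p. apply_bcontfun (X s) (fst p + c1, snd p + c2) - apply_bcontfun (X s) p)"
          by (simp add: Y_def)
        show ?thesis
          unfolding Y'_def yy Xe[OF s, of "fst q + c1" "snd q + c2"] prod.collapse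
          using Xe[OF s, of "fst q" "snd q"]
          upwind_shift[OF up[OF s] vp[OF s], of \<epsilon> "apply_bcontfun (X s)" "fst q" "snd q"]
          by (simp only: prod.collapse)
      qed
      also have "\<bar>\<dots>\<bar> \<le> 6 * B / \<epsilon> * m"
        by (rule upwind_bound[OF eps]) (use Bd[OF s] m in blast)+
      finally show ?thesis .
    qed
    show "Y q 0 = 0" for q using X0[of "fst q" "snd q"] by (simp add: Y_def)
    show "\<exists>M. \<forall>q s. 0 \<le> s \<and> s \<le> T \<longrightarrow> \<bar>Y q s\<bar> \<le> M" for T
    proof -
      obtain M where M: "\<forall>s. 0 \<le> s \<and> s \<le> T \<longrightarrow> norm (X s) \<le> M" using X_bdd[OF Xd] by blast
      have "\<bar>Y q s\<bar> \<le> 2*M" if "0 \<le> s \<and> s \<le> T" for q s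
        using abs_eval_le[of "X s" "(fst q + c1, snd q + c2)"] abs_eval_le[of "X s" q] M that
        unfolding Y_def by (smt (verit) abs_triangle_ineq4)
      then show ?thesis by blast
    qed
  qed (use B eps t in auto)
  then show ?thesis by (simp add: Y_def)
qed

lemma L1_lip:
  "dist (integral (cbox (-pi,-pi) (pi,pi)) (\<lambda>p. \<bar>apply_bcontfun f p\<bar>))
        (integral (cbox (-pi,-pi) (pi,pi)) (\<lambda>p. \<bar>apply_bcontfun g p\<bar>))
   \<le> Henstock_Kurzweil_Integration.content (cbox (-pi,-pi) (pi,pi::real)) * dist f (g :: (real \<times> real) \<Rightarrow>\<^sub>C real)"
proof -
  let ?Q = "cbox (-pi,-pi) (pi,pi) :: (real \<times> real) set"
  have int: "(\<lambda>p. \<bar>apply_bcontfun h p\<bar>) integrable_on ?Q" for h :: "(real \<times> real) \<Rightarrow>\<^sub>C real"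
    by (rule integrable_continuous) (intro continuous_intros continuous_on_apply_bcontfun)
  have "integral ?Q (\<lambda>p. \<bar>apply_bcontfun f p\<bar>) - integral ?Q (\<lambda>p. \<bar>apply_bcontfun g p\<bar>)
      = integral ?Q (\<lambda>p. \<bar>apply_bcontfun f p\<bar> - \<bar>apply_bcontfun g p\<bar>)"
    by (rule Henstock_Kurzweil_Integration.integral_diff[symmetric, OF int int])
  also have "norm \<dots> \<le> dist f g * Henstock_Kurzweil_Integration.content ?Q"
  proof (rule has_integral_bound[OF zero_le_dist])
    show "((\<lambda>p. \<bar>apply_bcontfun f p\<bar> - \<bar>apply_bcontfun g p\<bar>) has_integral
       integral ?Q (\<lambda>p. \<bar>apply_bcontfun f p\<bar> - \<bar>apply_bcontfun g p\<bar>)) ?Q"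
      by (rule integrable_integral, rule integrable_diff[OF int int])
    show "norm (\<bar>apply_bcontfun f p\<bar> - \<bar>apply_bcontfun g p\<bar>) \<le> dist f g" for p
      using dist_bounded[of f p g] by (simp add: dist_real_def)
  qed
  finally show ?thesis by (simp add: dist_real_def mult.commute)
qed

lemma L1_decay:
  fixes X X' u v :: "real \<Rightarrow> ((real \<times> real) \<Rightarrow>\<^sub>C real)"
  assumes eps: "0 < \<epsilon>"
    and Xd: "\<And>t. 0 \<le> t \<Longrightarrow> (X has_vector_derivative X' t) (at t within {0..})"
    and Xe: "\<And>t x y. 0 \<le> t \<Longrightarrow> apply_bcontfun (X' t) (x, y) = upwind_rhs \<epsilon> (apply_bcontfun (X t))
                     (apply_bcontfun (u t)) (apply_bcontfun (v t)) x y"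
    and Bd: "\<And>t p. 0 \<le> t \<Longrightarrow> \<bar>apply_bcontfun (u t) p\<bar> \<le> B \<and> \<bar>apply_bcontfun (v t) p\<bar> \<le> B"
    and up: "\<And>t. 0 \<le> t \<Longrightarrow> periodic2 (apply_bcontfun (u t))"
    and vp: "\<And>t. 0 \<le> t \<Longrightarrow> periodic2 (apply_bcontfun (v t))"
    and Xp: "\<And>t. 0 \<le> t \<Longrightarrow> periodic2 (apply_bcontfun (X t))"
    and T: "0 \<le> T"
  shows "integral (cbox (-pi,-pi) (pi,pi)) (\<lambda>p. \<bar>apply_bcontfun (X T) p\<bar>)
       \<le> integral (cbox (-pi,-pi) (pi,pi)) (\<lambda>p. \<bar>apply_bcontfun (X 0) p\<bar>)"
proof -
  let ?Q = "cbox (-pi,-pi) (pi,pi) :: (real \<times> real) set"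
  define G where "G f = integral ?Q (\<lambda>p. \<bar>apply_bcontfun f p\<bar>)" for f :: "(real \<times> real) \<Rightarrow>\<^sub>C real"
  define CQ where "CQ = Henstock_Kurzweil_Integration.content ?Q"
  have CQ: "CQ \<ge> 0" by (simp add: CQ_def)
  have B: "B \<ge> 0" using Bd[of 0 0] abs_ge_zero order_trans by auto
  have Gc: "continuous_on UNIV G"
    by (rule lipschitz_on_continuous_on[where L=CQ], rule lipschitz_onI)
       (use L1_lip CQ in \<open>auto simp: G_def CQ_def\<close>)
  have int: "(\<lambda>p. \<bar>f p\<bar>) integrable_on ?Q" if "continuous_on UNIV f" for f :: "real \<times> real \<Rightarrow> real"
    by (rule integrable_continuous) (intro continuous_intros continuous_on_subset[OF that], simp)
  have "G (X T) \<le> G (X 0)"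
  proof (rule dini_mono[where N="\<lambda>t. G (X t)", OF _ _ T])
    show "continuous_on {0..} (\<lambda>t. G (X t))"
      by (rule continuous_on_compose2[OF Gc X_cont[OF Xd]]) auto
  next
    fix t \<eta> :: real assume t: "0 \<le> t" and eta: "0 < \<eta>"
    define e where "e = \<eta> / (CQ + 1)"
    have e: "e > 0" using eta CQ by (simp add: e_def)
    have eCQ: "e * CQ \<le> \<eta>" using eta CQ by (simp add: e_def field_simps)
    from Xd[OF t] have "(X has_derivative (\<lambda>h. h *\<^sub>R X' t)) (at t within {0..})"
      by (simp add: has_vector_derivative_def)
    then obtain d where d: "d > 0" "\<And>s. s \<in> {0..} \<Longrightarrow> norm (s - t) < d \<Longrightarrow>
        norm (X s - X t - (s - t) *\<^sub>R X' t) \<le> e * norm (s - t)"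
      unfolding has_derivative_within_alt using e by blast
    define h0 where "h0 = min d (\<epsilon> / (2*B+1))"
    have "h0 > 0" using d eps B by (simp add: h0_def)
    moreover have "G (X (t+h)) \<le> G (X t) + \<eta> * h" if h: "0 < h" "h < h0" for h
    proof -
      have hd: "norm (X (t+h) - X t - h *\<^sub>R X' t) \<le> e * h"
        using d(2)[of "t+h"] h t by (simp add: h0_def)
      have hB: "h * (2*B) \<le> \<epsilon>"
      proof -
        have "h * (2*B) \<le> h * (2*B+1)" using h by simp
        also have "\<dots> \<le> \<epsilon>" using h B eps by (simp add: h0_def field_simps)
        finally show ?thesis .
      qed
      have pw: "\<bar>apply_bcontfun (X (t+h)) p\<bar> \<le> \<bar>apply_bcontfun (X t) p + h * upwind_rhs \<epsilon> (apply_bcontfun (X t))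
                     (apply_bcontfun (u t)) (apply_bcontfun (v t)) (fst p) (snd p)\<bar> + e * h" for p
      proof -
        have "\<bar>apply_bcontfun (X (t+h) - X t - h *\<^sub>R X' t) p\<bar> \<le> e * h"
          using abs_eval_le[of "X (t+h) - X t - h *\<^sub>R X' t" p] hd by linarith
        moreover have "apply_bcontfun (X' t) p = upwind_rhs \<epsilon> (apply_bcontfun (X t))
                     (apply_bcontfun (u t)) (apply_bcontfun (v t)) (fst p) (snd p)"
          using Xe[OF t, of "fst p" "snd p"] by simp
        ultimately show ?thesis by simp
      qed
      have cX: "continuous_on UNIV (apply_bcontfun (X t))" by simp
      have cX': "continuous_on UNIV (apply_bcontfun (X (t+h)))" by simp
      have cU: "continuous_on UNIV (apply_bcontfun (u t))" by simp
      have cV: "continuous_on UNIV (apply_bcontfun (v t))" by simp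
      have i1: "(\<lambda>p. \<bar>apply_bcontfun (X t) p + h * upwind_rhs \<epsilon> (apply_bcontfun (X t))
                     (apply_bcontfun (u t)) (apply_bcontfun (v t)) (fst p) (snd p)\<bar>) integrable_on ?Q"
        by (rule int) (unfold upwind_rhs_def, intro continuous_intros cont_comp[OF cX] cont_comp[OF cU] cont_comp[OF cV])
      have "G (X (t+h)) \<le> integral ?Q (\<lambda>p. \<bar>apply_bcontfun (X t) p + h * upwind_rhs \<epsilon> (apply_bcontfun (X t))
                     (apply_bcontfun (u t)) (apply_bcontfun (v t)) (fst p) (snd p)\<bar> + e * h)"
        unfolding G_def
        by (rule Henstock_Kurzweil_Integration.integral_le[OF int[OF cX'] integrable_add[OF i1 integrable_const] pw])
      also have "\<dots> = integral ?Q (\<lambda>p. \<bar>apply_bcontfun (X t) p + h * upwind_rhs \<epsilon> (apply_bcontfun (X t))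
                     (apply_bcontfun (u t)) (apply_bcontfun (v t)) (fst p) (snd p)\<bar>) + CQ * (e * h)"
        by (subst Henstock_Kurzweil_Integration.integral_add[OF i1 integrable_const]) (simp add: CQ_def)
      also have "\<dots> \<le> G (X t) + CQ * (e * h)"
        unfolding G_def
        by (rule add_right_mono, rule L1_step[OF eps less_imp_le[OF h(1)] _ _ hB cX cU cV Xp[OF t] up[OF t] vp[OF t]])
           (use Bd[OF t] in auto)
      also have "CQ * (e * h) \<le> \<eta> * h" using eCQ h by (simp add: mult.assoc[symmetric] mult.commute[of CQ])
      finally show ?thesis by simp
    qed
    ultimately show "\<exists>h0>0. \<forall>h. 0 < h \<and> h < h0 \<longrightarrow> G (X (t+h)) \<le> G (X t) + \<eta> * h" by blast
  qed
  then show ?thesis by (simp add: G_def)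
qed

lemma cont_bound_box:
  fixes g :: "real \<times> real \<Rightarrow> real"
  assumes "continuous_on UNIV g"
  shows "\<exists>M. \<forall>z\<in>cbox a b. \<bar>g z\<bar> \<le> M"
proof -
  have "compact (g ` cbox a b)"
    by (rule compact_continuous_image[OF continuous_on_subset[OF assms]]) auto
  then obtain M where "\<forall>w\<in>g ` cbox a b. norm w \<le> M" using compact_imp_bounded bounded_iff by metis
  then show ?thesis by auto
qed

lemma phi_facts:
  fixes \<phi> :: "real \<times> real \<Rightarrow> real"
  assumes sm: "smooth2 \<phi>" and supp: "compact (closure {p. \<phi> p \<noteq> 0})"
  obtains \<phi>x \<phi>y R \<Phi> where "\<And>z. (\<phi> has_derivative (\<lambda>h. fst h * \<phi>x z + snd h * \<phi>y z)) (at z)"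
    "continuous_on UNIV \<phi>" "continuous_on UNIV \<phi>x" "continuous_on UNIV \<phi>y" "R > 0"
    "\<And>z. \<phi> z \<noteq> 0 \<or> \<phi>x z \<noteq> 0 \<or> \<phi>y z \<noteq> 0 \<Longrightarrow> \<bar>fst z\<bar> \<le> R \<and> \<bar>snd z\<bar> \<le> R"
    "\<And>z. \<bar>\<phi> z\<bar> \<le> \<Phi> \<and> \<bar>\<phi>x z\<bar> \<le> \<Phi> \<and> \<bar>\<phi>y z\<bar> \<le> \<Phi>" "\<Phi> \<ge> 0"
proof -
  obtain S where S0: "\<phi> \<in> S \<and> (\<forall>g\<in>S. \<exists>gx\<in>S. \<exists>gy\<in>S.
      \<forall>p. (g has_derivative (\<lambda>h. fst h * gx p + snd h * gy p)) (at p))"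
    using sm unfolding smooth2_def by (rule exE)
  note S = conjunct1[OF S0] conjunct2[OF S0]
  have contS: "continuous_on UNIV g" if "g \<in> S" for g
  proof -
    from bspec[OF S(2) that] obtain gx gy where "\<forall>p. (g has_derivative (\<lambda>h. fst h * gx p + snd h * gy p)) (at p)"
      by (elim bexE) 
    then have "\<forall>p. continuous (at p) g" using has_derivative_continuous by blast
    then show ?thesis by (simp add: continuous_at_imp_continuous_on)
  qed
  obtain \<phi>x \<phi>y where xy: "\<phi>x \<in> S" "\<phi>y \<in> S" "\<And>z. (\<phi> has_derivative (\<lambda>h. fst h * \<phi>x z + snd h * \<phi>y z)) (at z)"
  proof -
    from bspec[OF S(2) S(1)] obtain gx gy where "gx \<in> S" "gy \<in> S"
      "\<forall>p. (\<phi> has_derivative (\<lambda>h. fst h * gx p + snd h * gy p)) (at p)" by blast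
    then show ?thesis using that by blast
  qed
  define K where "K = closure {p. \<phi> p \<noteq> 0}"
  obtain R0 c where R0: "K \<subseteq> cball c R0" "0 \<le> R0"
  proof -
    have "bounded K" using compact_imp_bounded[OF supp] unfolding K_def .
    then show ?thesis using that unfolding bounded_subset_cball by blast
  qed
  define R where "R = R0 + norm c + 1"
  have zero: "\<phi> z = 0 \<and> \<phi>x z = 0 \<and> \<phi>y z = 0" if z: "z \<notin> K" for z
  proof -
    have o: "open (- K)" unfolding K_def by (rule open_Compl, rule closed_closure)
    have z0: "\<phi> w = 0" if "w \<in> - K" for w
    proof (rule ccontr)
      assume "\<phi> w \<noteq> 0"
      then have "w \<in> closure {p. \<phi> p \<noteq> 0}" using closure_subset[of "{p. \<phi> p \<noteq> 0}"] by auto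
      then show False using that unfolding K_def by simp
    qed
    have zK: "z \<in> - K" using z by simp
    have "((\<lambda>_. 0) has_derivative (\<lambda>h. fst h * \<phi>x z + snd h * \<phi>y z)) (at z)"
      by (rule has_derivative_transform_within_open[OF xy(3) o zK z0])
    moreover have "((\<lambda>_. 0::real) has_derivative (\<lambda>h. 0)) (at z)" by simp
    ultimately have "(\<lambda>h. fst h * \<phi>x z + snd h * \<phi>y z) = (\<lambda>h. 0)" by (rule has_derivative_unique)
    from fun_cong[OF this, of "(1,0)"] fun_cong[OF this, of "(0,1)"] z0[OF zK] show ?thesis by simp
  qed
  have supR: "\<bar>fst z\<bar> \<le> R \<and> \<bar>snd z\<bar> \<le> R" if "\<phi> z \<noteq> 0 \<or> \<phi>x z \<noteq> 0 \<or> \<phi>y z \<noteq> 0" for z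
  proof -
    have "z \<in> K" using zero that by blast
    then have "norm (z - c) \<le> R0" using R0 by (auto simp: dist_norm norm_minus_commute)
    moreover have "norm z \<le> norm (z - c) + norm c" using norm_triangle_ineq[of "z - c" c] by simp
    ultimately have "norm z \<le> R0 + norm c" by linarith
    moreover have "\<bar>fst z\<bar> \<le> norm z" "\<bar>snd z\<bar> \<le> norm z"
      using norm_fst_le[of "fst z" "snd z"] norm_snd_le[of "snd z" "fst z"] by auto
    ultimately show ?thesis unfolding R_def by linarith
  qed
  have cphi: "continuous_on UNIV \<phi>" "continuous_on UNIV \<phi>x" "continuous_on UNIV \<phi>y"
    using contS S(1) xy by auto
  obtain M1 where M1: "\<forall>z\<in>cbox (-R,-R) (R,R). \<bar>\<phi> z\<bar> \<le> M1" using cont_bound_box[OF cphi(1)] by blast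
  obtain M2 where M2: "\<forall>z\<in>cbox (-R,-R) (R,R). \<bar>\<phi>x z\<bar> \<le> M2" using cont_bound_box[OF cphi(2)] by blast
  obtain M3 where M3: "\<forall>z\<in>cbox (-R,-R) (R,R). \<bar>\<phi>y z\<bar> \<le> M3" using cont_bound_box[OF cphi(3)] by blast
  define \<Phi> where "\<Phi> = max (max M1 M2) (max M3 0)"
  have bnd: "\<bar>\<phi> z\<bar> \<le> \<Phi> \<and> \<bar>\<phi>x z\<bar> \<le> \<Phi> \<and> \<bar>\<phi>y z\<bar> \<le> \<Phi>" for z
  proof (cases "\<phi> z \<noteq> 0 \<or> \<phi>x z \<noteq> 0 \<or> \<phi>y z \<noteq> 0")
    case True
    then have "z \<in> cbox (-R,-R) (R,R)" using supR[OF True] by (cases z) auto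
    then have "\<bar>\<phi> z\<bar> \<le> M1" "\<bar>\<phi>x z\<bar> \<le> M2" "\<bar>\<phi>y z\<bar> \<le> M3" using M1 M2 M3 by blast+
    then show ?thesis unfolding \<Phi>_def by linarith
  next
    case False then show ?thesis unfolding \<Phi>_def by auto
  qed
  show ?thesis
  proof (rule that[OF xy(3) cphi _ supR bnd])
    show "R > 0" unfolding R_def using R0(2) norm_ge_zero[of c] by linarith
    show "\<Phi> \<ge> 0" unfolding \<Phi>_def by linarith
  qed
qed

lemma moll_supp:
  fixes \<psi> :: "real \<times> real \<Rightarrow> real"
  assumes supp: "\<And>z. \<psi> z \<noteq> 0 \<Longrightarrow> \<bar>fst z\<bar> \<le> R \<and> \<bar>snd z\<bar> \<le> R" and d: "0 < \<delta>" "\<delta> \<le> 1"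
    and R: "R > 0" and nz: "mollifier \<delta> \<psi> z \<noteq> 0"
  shows "\<bar>fst z\<bar> \<le> R \<and> \<bar>snd z\<bar> \<le> R"
proof -
  have "\<psi> (fst z / \<delta>, snd z / \<delta>) \<noteq> 0" using nz by (auto simp: mollifier_def)
  from supp[OF this] d have "\<bar>fst z\<bar> / \<delta> \<le> R" "\<bar>snd z\<bar> / \<delta> \<le> R" by (simp_all add: abs_divide)
  then have "\<bar>fst z\<bar> \<le> R * \<delta>" "\<bar>snd z\<bar> \<le> R * \<delta>" using d by (simp_all add: field_simps)
  moreover have "R * \<delta> \<le> R" using d R by (simp add: mult_left_le)
  ultimately show ?thesis by linarith
qed

lemma moll_cont:
  fixes \<psi> :: "real \<times> real \<Rightarrow> real"
  assumes "continuous_on UNIV \<psi>"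
  shows "continuous_on UNIV (mollifier \<delta> \<psi>)"
proof -
  have "mollifier \<delta> \<psi> = (\<lambda>p. \<psi> (fst p * inverse \<delta>, snd p * inverse \<delta>) * inverse (\<delta>^2))"
    by (rule ext) (simp add: mollifier_def divide_inverse)
  then show ?thesis by (simp, intro continuous_intros cont_comp[OF assms])
qed

lemma conv_repr:
  fixes f \<psi> :: "real \<times> real \<Rightarrow> real"
  assumes fc: "continuous_on UNIV f" and \<psi>c: "continuous_on UNIV \<psi>"
    and R: "R > 0" and supp: "\<And>z. \<psi> z \<noteq> 0 \<Longrightarrow> \<bar>fst z\<bar> \<le> R \<and> \<bar>snd z\<bar> \<le> R"
    and d: "0 < \<delta>" "\<delta> \<le> 1"
    and p: "\<bar>fst p' - x0\<bar> \<le> R" "\<bar>snd p' - y0\<bar> \<le> R"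
  shows "conv2 f (mollifier \<delta> \<psi>) p' =
     integral (cbox (x0 - 2*R, y0 - 2*R) (x0 + 2*R, y0 + 2*R)) (\<lambda>q. f q * mollifier \<delta> \<psi> (p' - q))"
proof -
  define m where "m = mollifier \<delta> \<psi>"
  have mc: "continuous_on UNIV m" unfolding m_def by (rule moll_cont[OF \<psi>c])
  have ms: "\<bar>fst z\<bar> \<le> R \<and> \<bar>snd z\<bar> \<le> R" if "m z \<noteq> 0" for z
    using moll_supp[OF supp d R] that unfolding m_def by blast
  define C where "C = cbox (-R,-R) (R,R)"
  define F where "F q = f (p' - q) * m q" for q
  have Fc: "continuous_on UNIV F" unfolding F_def
    by (intro continuous_intros cont_comp[OF fc] mc)
  have F0: "F q = 0" if "q \<notin> C" for q
  proof (rule ccontr)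
    assume "F q \<noteq> 0"
    then have "m q \<noteq> 0" by (auto simp: F_def)
    from ms[OF this] have "q \<in> C" unfolding C_def by (cases q) auto
    then show False using that by simp
  qed
  define J where "J = integral C F"
  have hF: "(F has_integral J) C" unfolding J_def C_def
    by (rule integrable_integral, rule integrable_continuous[OF continuous_on_subset[OF Fc]]) auto
  have hFU: "(F has_integral J) UNIV" by (rule has_integral_on_superset[OF hF F0]) auto
  have conv: "conv2 f m p' = J" unfolding conv2_def F_def[symmetric] using hFU by (rule integral_unique)
  define G where "G q = f q * m (p' - q)" for q
  have aff: "((\<lambda>x. F ((-1) *\<^sub>R x + p')) has_integral (1 / (\<bar>-1\<bar> ^ DIM(real \<times> real))) *\<^sub>R J)
      ((\<lambda>x. (1 / (-1)) *\<^sub>R x + -((1 / (-1)) *\<^sub>R p')) ` C)"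
    by (rule has_integral_affinity[OF hF[unfolded C_def], folded C_def]) simp
  have GF: "(\<lambda>x. F ((-1) *\<^sub>R x + p')) = G" by (rule ext) (simp add: F_def G_def)
  have hG: "(G has_integral J) ((\<lambda>x. (1 / (-1)) *\<^sub>R x + -((1 / (-1)) *\<^sub>R p')) ` C)"
    using aff unfolding GF by simp
  have G0: "G x = 0" if "x \<notin> (\<lambda>x. (1 / (-1)) *\<^sub>R x + -((1 / (-1)) *\<^sub>R p')) ` C" for x
  proof (rule ccontr)
    assume "G x \<noteq> 0"
    then have "m (p' - x) \<noteq> 0" by (auto simp: G_def)
    from ms[OF this] have "p' - x \<in> C" unfolding C_def by (cases "p' - x") auto
    moreover have "x = (1 / (-1)) *\<^sub>R (p' - x) + -((1 / (-1)) *\<^sub>R p')" by simp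
    ultimately have "x \<in> (\<lambda>x. (1 / (-1)) *\<^sub>R x + -((1 / (-1)) *\<^sub>R p')) ` C" by (rule rev_image_eqI)
    then show False using that by simp
  qed
  have hGU: "(G has_integral J) UNIV" by (rule has_integral_on_superset[OF hG G0]) auto
  define Bp where "Bp = cbox (x0 - 2*R, y0 - 2*R) (x0 + 2*R, y0 + 2*R)"
  have Gc: "continuous_on UNIV G" unfolding G_def
    by (intro continuous_intros cont_comp[OF fc] cont_comp[OF mc])
  have G0': "G x = 0" if "x \<notin> Bp" for x
  proof (rule ccontr)
    assume "G x \<noteq> 0"
    then have "m (p' - x) \<noteq> 0" by (auto simp: G_def)
    from ms[OF this] have "\<bar>fst p' - fst x\<bar> \<le> R" "\<bar>snd p' - snd x\<bar> \<le> R" by auto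
    then have "x \<in> Bp" using p unfolding Bp_def by (cases x) auto
    then show False using that by simp
  qed
  have hGB: "(G has_integral integral Bp G) Bp" unfolding Bp_def
    by (rule integrable_integral, rule integrable_continuous[OF continuous_on_subset[OF Gc]]) auto
  have "(G has_integral integral Bp G) UNIV" by (rule has_integral_on_superset[OF hGB G0']) auto
  then have "integral Bp G = J" using hGU by (rule has_integral_unique)
  then show ?thesis using conv unfolding Bp_def G_def m_def by simp
qed

lemma int_prod_bound:
  fixes f k :: "real \<times> real \<Rightarrow> real"
  assumes fc: "continuous_on UNIV f" and kc: "continuous_on UNIV k" and kb: "\<And>q. \<bar>k q\<bar> \<le> K"
  shows "\<bar>integral (cbox a b) (\<lambda>q. f q * k q)\<bar> \<le> K * integral (cbox a b) (\<lambda>q. \<bar>f q\<bar>)"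
proof -
  have "norm (integral (cbox a b) (\<lambda>q. f q * k q)) \<le> integral (cbox a b) (\<lambda>q. \<bar>f q\<bar> * K)"
  proof (rule integral_norm_bound_integral)
    show "(\<lambda>q. f q * k q) integrable_on cbox a b"
      by (rule integrable_continuous, rule continuous_on_subset[of UNIV]) (auto intro!: continuous_intros fc kc)
    show "(\<lambda>q. \<bar>f q\<bar> * K) integrable_on cbox a b"
      by (rule integrable_continuous, rule continuous_on_subset[of UNIV]) (auto intro!: continuous_intros fc)
    show "norm (f q * k q) \<le> \<bar>f q\<bar> * K" for q
      using kb[of q] by (simp add: abs_mult mult_left_mono)
  qed
  also have "\<dots> = K * integral (cbox a b) (\<lambda>q. \<bar>f q\<bar>)"
    by (simp add: mult.commute)
  finally show ?thesis by simp
qed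

lemma psi_dx:
  fixes \<psi> :: "real \<times> real \<Rightarrow> real"
  assumes \<psi>d: "\<And>z. (\<psi> has_derivative (\<lambda>h. fst h * \<psi>x z + snd h * \<psi>y z)) (at z)" and dz: "\<delta> \<noteq> 0"
  shows "((\<lambda>s. c * (\<psi> ((s - a)/\<delta>, b) / \<delta>^2)) has_field_derivative c * (\<psi>x ((s - a)/\<delta>, b) / \<delta>^3)) (at s within U)"
proof -
  have g: "((\<lambda>s. ((s - a)/\<delta>, b)) has_derivative (\<lambda>h. (h/\<delta>, 0))) (at s within U)"
    using dz by (auto intro!: derivative_eq_intros)
  have "((\<lambda>s. \<psi> ((s - a)/\<delta>, b)) has_derivative (\<lambda>h. fst (h/\<delta>, 0::real) * \<psi>x ((s - a)/\<delta>, b) + snd (h/\<delta>, 0::real) * \<psi>y ((s - a)/\<delta>, b))) (at s within U)"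
    by (rule has_derivative_compose[OF g \<psi>d])
  then have "((\<lambda>s. \<psi> ((s - a)/\<delta>, b)) has_derivative (*) (\<psi>x ((s - a)/\<delta>, b) / \<delta>)) (at s within U)"
    by (rule has_derivative_eq_rhs) (auto simp: fun_eq_iff)
  then have "((\<lambda>s. \<psi> ((s - a)/\<delta>, b)) has_field_derivative (\<psi>x ((s - a)/\<delta>, b) / \<delta>)) (at s within U)"
    by (simp add: has_field_derivative_def)
  then have "((\<lambda>s. c * (\<psi> ((s - a)/\<delta>, b) / \<delta>^2)) has_field_derivative c * ((\<psi>x ((s - a)/\<delta>, b) / \<delta>) / \<delta>^2)) (at s within U)"
    by (intro DERIV_cmult DERIV_cdivide)
  then show ?thesis by (simp add: power3_eq_cube power2_eq_square mult.assoc)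
qed

lemma psi_dy:
  fixes \<psi> :: "real \<times> real \<Rightarrow> real"
  assumes \<psi>d: "\<And>z. (\<psi> has_derivative (\<lambda>h. fst h * \<psi>x z + snd h * \<psi>y z)) (at z)" and dz: "\<delta> \<noteq> 0"
  shows "((\<lambda>s. c * (\<psi> (b, (s - a)/\<delta>) / \<delta>^2)) has_field_derivative c * (\<psi>y (b, (s - a)/\<delta>) / \<delta>^3)) (at s within U)"
proof -
  have g: "((\<lambda>s. (b, (s - a)/\<delta>)) has_derivative (\<lambda>h. (0, h/\<delta>))) (at s within U)"
    using dz by (auto intro!: derivative_eq_intros)
  have "((\<lambda>s. \<psi> (b, (s - a)/\<delta>)) has_derivative (\<lambda>h. fst (0::real, h/\<delta>) * \<psi>x (b, (s - a)/\<delta>) + snd (0::real, h/\<delta>) * \<psi>y (b, (s - a)/\<delta>))) (at s within U)"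
    by (rule has_derivative_compose[OF g \<psi>d])
  then have "((\<lambda>s. \<psi> (b, (s - a)/\<delta>)) has_derivative (*) (\<psi>y (b, (s - a)/\<delta>) / \<delta>)) (at s within U)"
    by (rule has_derivative_eq_rhs) (auto simp: fun_eq_iff)
  then have "((\<lambda>s. \<psi> (b, (s - a)/\<delta>)) has_field_derivative (\<psi>y (b, (s - a)/\<delta>) / \<delta>)) (at s within U)"
    by (simp add: has_field_derivative_def)
  then have "((\<lambda>s. c * (\<psi> (b, (s - a)/\<delta>) / \<delta>^2)) has_field_derivative c * ((\<psi>y (b, (s - a)/\<delta>) / \<delta>) / \<delta>^2)) (at s within U)"
    by (intro DERIV_cmult DERIV_cdivide)
  then show ?thesis by (simp add: power3_eq_cube power2_eq_square mult.assoc)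
qed

lemma conv_deriv_x:
  fixes f \<psi> \<psi>x \<psi>y :: "real \<times> real \<Rightarrow> real"
  assumes fc: "continuous_on UNIV f" and \<psi>c: "continuous_on UNIV \<psi>" and \<psi>xc: "continuous_on UNIV \<psi>x"
    and \<psi>d: "\<And>z. (\<psi> has_derivative (\<lambda>h. fst h * \<psi>x z + snd h * \<psi>y z)) (at z)"
    and R: "R > 0" and supp: "\<And>z. \<psi> z \<noteq> 0 \<Longrightarrow> \<bar>fst z\<bar> \<le> R \<and> \<bar>snd z\<bar> \<le> R"
    and d: "0 < \<delta>" "\<delta> \<le> 1"
  shows "((\<lambda>s. conv2 f (mollifier \<delta> \<psi>) (s, y0)) has_field_derivative
      integral (cbox (x0 - 2*R, y0 - 2*R) (x0 + 2*R, y0 + 2*R))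
        (\<lambda>q. f q * (\<psi>x ((x0 - fst q)/\<delta>, (y0 - snd q)/\<delta>) / \<delta>^3))) (at x0)"
proof -
  define Bp where "Bp = cbox (x0 - 2*R, y0 - 2*R) (x0 + 2*R, y0 + 2*R)"
  define U where "U = ball x0 R"
  have dz: "\<delta> \<noteq> 0" using d by simp
  have eq: "conv2 f (mollifier \<delta> \<psi>) (s, y0) = integral Bp (\<lambda>q. f q * (\<psi> ((s - fst q)/\<delta>, (y0 - snd q)/\<delta>) / \<delta>^2))"
    if "s \<in> U" for s
  proof -
    have "\<bar>fst (s, y0) - x0\<bar> \<le> R" "\<bar>snd (s, y0) - y0\<bar> \<le> R" using that R by (auto simp: U_def dist_real_def)
    from conv_repr[OF fc \<psi>c R supp d this] show ?thesis
      unfolding Bp_def by (simp add: mollifier_def)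
  qed
  have L: "((\<lambda>s. integral Bp (\<lambda>q. f q * (\<psi> ((s - fst q)/\<delta>, (y0 - snd q)/\<delta>) / \<delta>^2))) has_field_derivative
      integral Bp (\<lambda>q. f q * (\<psi>x ((x0 - fst q)/\<delta>, (y0 - snd q)/\<delta>) / \<delta>^3))) (at x0 within U)"
    unfolding Bp_def
  proof (rule leibniz_rule_field_derivative[where fx="\<lambda>s q. f q * (\<psi>x ((s - fst q)/\<delta>, (y0 - snd q)/\<delta>) / \<delta>^3)"])
    show "((\<lambda>s. f q * (\<psi> ((s - fst q)/\<delta>, (y0 - snd q)/\<delta>) / \<delta>^2)) has_field_derivative
        f q * (\<psi>x ((s - fst q)/\<delta>, (y0 - snd q)/\<delta>) / \<delta>^3)) (at s within U)" for s q
      by (rule psi_dx[OF \<psi>d dz])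
    show "(\<lambda>q. f q * (\<psi> ((s - fst q)/\<delta>, (y0 - snd q)/\<delta>) / \<delta>^2)) integrable_on
        cbox (x0 - 2*R, y0 - 2*R) (x0 + 2*R, y0 + 2*R)" for s
      by (rule integrable_continuous, rule continuous_on_subset[of UNIV])
         (auto intro!: continuous_intros cont_comp[OF fc] cont_comp[OF \<psi>c] simp: dz)
    show "continuous_on (U \<times> cbox (x0 - 2*R, y0 - 2*R) (x0 + 2*R, y0 + 2*R))
        (\<lambda>(s, q). f q * (\<psi>x ((s - fst q)/\<delta>, (y0 - snd q)/\<delta>) / \<delta>^3))"
      unfolding case_prod_beta'
      by (rule continuous_on_subset[of UNIV])
         (auto intro!: continuous_intros cont_comp[OF fc] cont_comp[OF \<psi>xc] simp: dz)
    show "x0 \<in> U" using R by (simp add: U_def)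
    show "convex U" by (simp add: U_def)
  qed
  have "at x0 within U = at x0" by (rule at_within_open) (use R in \<open>auto simp: U_def\<close>)
  with L have L': "((\<lambda>s. integral Bp (\<lambda>q. f q * (\<psi> ((s - fst q)/\<delta>, (y0 - snd q)/\<delta>) / \<delta>^2))) has_field_derivative
      integral Bp (\<lambda>q. f q * (\<psi>x ((x0 - fst q)/\<delta>, (y0 - snd q)/\<delta>) / \<delta>^3))) (at x0)" by simp
  show ?thesis unfolding Bp_def[symmetric]
    by (rule has_field_derivative_transform_within_open[OF L', of U]) (use R eq in \<open>auto simp: U_def\<close>)
qed
lemma conv_deriv_y:
  fixes f \<psi> \<psi>x \<psi>y :: "real \<times> real \<Rightarrow> real"
  assumes fc: "continuous_on UNIV f" and \<psi>c: "continuous_on UNIV \<psi>" and \<psi>xc: "continuous_on UNIV \<psi>y"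
    and \<psi>d: "\<And>z. (\<psi> has_derivative (\<lambda>h. fst h * \<psi>x z + snd h * \<psi>y z)) (at z)"
    and R: "R > 0" and supp: "\<And>z. \<psi> z \<noteq> 0 \<Longrightarrow> \<bar>fst z\<bar> \<le> R \<and> \<bar>snd z\<bar> \<le> R"
    and d: "0 < \<delta>" "\<delta> \<le> 1"
  shows "((\<lambda>s. conv2 f (mollifier \<delta> \<psi>) (x0, s)) has_field_derivative
      integral (cbox (x0 - 2*R, y0 - 2*R) (x0 + 2*R, y0 + 2*R))
        (\<lambda>q. f q * (\<psi>y ((x0 - fst q)/\<delta>, (y0 - snd q)/\<delta>) / \<delta>^3))) (at y0)"
proof -
  define Bp where "Bp = cbox (x0 - 2*R, y0 - 2*R) (x0 + 2*R, y0 + 2*R)"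
  define U where "U = ball y0 R"
  have dz: "\<delta> \<noteq> 0" using d by simp
  have eq: "conv2 f (mollifier \<delta> \<psi>) (x0, s) = integral Bp (\<lambda>q. f q * (\<psi> ((x0 - fst q)/\<delta>, (s - snd q)/\<delta>) / \<delta>^2))"
    if "s \<in> U" for s
  proof -
    have "\<bar>fst (x0, s) - x0\<bar> \<le> R" "\<bar>snd (x0, s) - y0\<bar> \<le> R" using that R by (auto simp: U_def dist_real_def)
    from conv_repr[OF fc \<psi>c R supp d this] show ?thesis
      unfolding Bp_def by (simp add: mollifier_def)
  qed
  have L: "((\<lambda>s. integral Bp (\<lambda>q. f q * (\<psi> ((x0 - fst q)/\<delta>, (s - snd q)/\<delta>) / \<delta>^2))) has_field_derivative
      integral Bp (\<lambda>q. f q * (\<psi>y ((x0 - fst q)/\<delta>, (y0 - snd q)/\<delta>) / \<delta>^3))) (at y0 within U)"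
    unfolding Bp_def
  proof (rule leibniz_rule_field_derivative[where fx="\<lambda>s q. f q * (\<psi>y ((x0 - fst q)/\<delta>, (s - snd q)/\<delta>) / \<delta>^3)"])
    show "((\<lambda>s. f q * (\<psi> ((x0 - fst q)/\<delta>, (s - snd q)/\<delta>) / \<delta>^2)) has_field_derivative
        f q * (\<psi>y ((x0 - fst q)/\<delta>, (s - snd q)/\<delta>) / \<delta>^3)) (at s within U)" for s q
      by (rule psi_dy[OF \<psi>d dz])
    show "(\<lambda>q. f q * (\<psi> ((x0 - fst q)/\<delta>, (s - snd q)/\<delta>) / \<delta>^2)) integrable_on
        cbox (x0 - 2*R, y0 - 2*R) (x0 + 2*R, y0 + 2*R)" for s
      by (rule integrable_continuous, rule continuous_on_subset[of UNIV])
         (auto intro!: continuous_intros cont_comp[OF fc] cont_comp[OF \<psi>c] simp: dz)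
    show "continuous_on (U \<times> cbox (x0 - 2*R, y0 - 2*R) (x0 + 2*R, y0 + 2*R))
        (\<lambda>(s, q). f q * (\<psi>y ((x0 - fst q)/\<delta>, (s - snd q)/\<delta>) / \<delta>^3))"
      unfolding case_prod_beta'
      by (rule continuous_on_subset[of UNIV])
         (auto intro!: continuous_intros cont_comp[OF fc] cont_comp[OF \<psi>xc] simp: dz)
    show "y0 \<in> U" using R by (simp add: U_def)
    show "convex U" by (simp add: U_def)
  qed
  have "at y0 within U = at y0" by (rule at_within_open) (use R in \<open>auto simp: U_def\<close>)
  with L have L': "((\<lambda>s. integral Bp (\<lambda>q. f q * (\<psi> ((x0 - fst q)/\<delta>, (s - snd q)/\<delta>) / \<delta>^2))) has_field_derivative
      integral Bp (\<lambda>q. f q * (\<psi>y ((x0 - fst q)/\<delta>, (y0 - snd q)/\<delta>) / \<delta>^3))) (at y0)" by simp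
  show ?thesis unfolding Bp_def[symmetric]
    by (rule has_field_derivative_transform_within_open[OF L', of U]) (use R eq in \<open>auto simp: U_def\<close>)
qed

lemma box_bound:
  fixes g :: "real \<times> real \<Rightarrow> real"
  assumes gc: "continuous_on UNIV g" and gp: "periodic2 g" and g0: "\<And>p. 0 \<le> g p"
    and k: "4 * R \<le> 2 * pi * real k"
  shows "integral (cbox (x0 - 2*R, y0 - 2*R) (x0 + 2*R, y0 + 2*R)) g
     \<le> real k ^ 2 * integral (cbox (-pi,-pi) (pi,pi)) g"
proof -
  have int: "g integrable_on cbox a b" for a b
    by (rule integrable_continuous[OF continuous_on_subset[OF gc]]) auto
  have "integral (cbox (x0 - 2*R, y0 - 2*R) (x0 + 2*R, y0 + 2*R)) g
     \<le> integral (cbox (x0 - 2*R, y0 - 2*R) (x0 - 2*R + 2*pi*real k, y0 - 2*R + 2*pi*real k)) g"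
  proof (rule integral_subset_le[OF _ int int])
    show "cbox (x0 - 2*R, y0 - 2*R) (x0 + 2*R, y0 + 2*R)
        \<subseteq> cbox (x0 - 2*R, y0 - 2*R) (x0 - 2*R + 2*pi*real k, y0 - 2*R + 2*pi*real k)"
    proof
      fix z assume "z \<in> cbox (x0 - 2*R, y0 - 2*R) (x0 + 2*R, y0 + 2*R)"
      then show "z \<in> cbox (x0 - 2*R, y0 - 2*R) (x0 - 2*R + 2*pi*real k, y0 - 2*R + 2*pi*real k)"
        using k by (cases z) auto
    qed
    show "\<forall>x\<in>cbox (x0 - 2*R, y0 - 2*R) (x0 - 2*R + 2*pi*real k, y0 - 2*R + 2*pi*real k). 0 \<le> g x"
      using g0 by blast
  qed
  also have "\<dots> = real k ^ 2 * integral (cbox (-pi,-pi) (pi,pi)) g" by (rule per_box[OF gc gp])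
  finally show ?thesis .
qed
theorem mainTheorem8:
  fixes u v X X' :: "real \<Rightarrow> real \<Rightarrow> ((real \<times> real) \<Rightarrow>\<^sub>C real)"
    and \<rho>0 :: "real \<Rightarrow> ((real \<times> real) \<Rightarrow>\<^sub>C real)"
    and \<phi> :: "real \<times> real \<Rightarrow> real"
    and \<alpha> :: real
  assumes u_per: "\<And>\<epsilon> t. 0 < \<epsilon> \<Longrightarrow> \<epsilon> < 1 \<Longrightarrow> 0 \<le> t \<Longrightarrow> periodic2 (apply_bcontfun (u \<epsilon> t))"
    and v_per: "\<And>\<epsilon> t. 0 < \<epsilon> \<Longrightarrow> \<epsilon> < 1 \<Longrightarrow> 0 \<le> t \<Longrightarrow> periodic2 (apply_bcontfun (v \<epsilon> t))"
    and u_cont: "\<And>\<epsilon>. 0 < \<epsilon> \<Longrightarrow> \<epsilon> < 1 \<Longrightarrow> continuous_on {0..} (u \<epsilon>)"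
    and v_cont: "\<And>\<epsilon>. 0 < \<epsilon> \<Longrightarrow> \<epsilon> < 1 \<Longrightarrow> continuous_on {0..} (v \<epsilon>)"
    and uv_bdd: "\<exists>B. \<forall>\<epsilon> x y t. 0 < \<epsilon> \<and> \<epsilon> < 1 \<and> 0 \<le> t \<longrightarrow>
                   \<bar>apply_bcontfun (u \<epsilon> t) (x, y)\<bar> \<le> B \<and> \<bar>apply_bcontfun (v \<epsilon> t) (x, y)\<bar> \<le> B"
    and rho0_per: "\<And>\<epsilon>. 0 < \<epsilon> \<Longrightarrow> \<epsilon> < 1 \<Longrightarrow> periodic2 (apply_bcontfun (\<rho>0 \<epsilon>))"
    and rho0_L1: "\<exists>C. \<forall>\<epsilon>. 0 < \<epsilon> \<and> \<epsilon> < 1 \<longrightarrow>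
                   integral (cbox (-pi, -pi) (pi, pi)) (\<lambda>p. \<bar>apply_bcontfun (\<rho>0 \<epsilon>) p\<bar>) \<le> C"
    and X_init: "\<And>\<epsilon>. 0 < \<epsilon> \<Longrightarrow> \<epsilon> < 1 \<Longrightarrow> X \<epsilon> 0 = \<rho>0 \<epsilon>"
    and X'_cont: "\<And>\<epsilon>. 0 < \<epsilon> \<Longrightarrow> \<epsilon> < 1 \<Longrightarrow> continuous_on {0..} (X' \<epsilon>)"
    and X_deriv: "\<And>\<epsilon> t. 0 < \<epsilon> \<Longrightarrow> \<epsilon> < 1 \<Longrightarrow> 0 \<le> t \<Longrightarrow>
                   (X \<epsilon> has_vector_derivative X' \<epsilon> t) (at t within {0..})"
    and X_eq: "\<And>\<epsilon> t x y. 0 < \<epsilon> \<Longrightarrow> \<epsilon> < 1 \<Longrightarrow> 0 \<le> t \<Longrightarrow>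
                   apply_bcontfun (X' \<epsilon> t) (x, y) = upwind_rhs \<epsilon> (apply_bcontfun (X \<epsilon> t))
                     (apply_bcontfun (u \<epsilon> t)) (apply_bcontfun (v \<epsilon> t)) x y"
    and phi_smooth: "smooth2 \<phi>"
    and phi_supp: "compact (closure {p. \<phi> p \<noteq> 0})"
    and phi_int: "(\<phi> has_integral 1) UNIV"
    and alpha: "0 < \<alpha>" "\<alpha> \<le> 1"
  shows "\<exists>M>0. \<forall>\<epsilon> x y t. 0 < \<epsilon> \<and> \<epsilon> < 1 \<and> 0 \<le> t \<longrightarrow>
           (let \<rho> = conv2 (apply_bcontfun (X \<epsilon> t)) (mollifier (\<epsilon> powr \<alpha>) \<phi>) in
              \<bar>\<rho> (x, y)\<bar> \<le> M / \<epsilon> powr (2 * \<alpha>)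
            \<and> (\<lambda>s. \<rho> (s, y)) differentiable (at x)
            \<and> \<bar>deriv (\<lambda>s. \<rho> (s, y)) x\<bar> \<le> M / \<epsilon> powr (3 * \<alpha>)
            \<and> (\<lambda>s. \<rho> (x, s)) differentiable (at y)
            \<and> \<bar>deriv (\<lambda>s. \<rho> (x, s)) y\<bar> \<le> M / \<epsilon> powr (3 * \<alpha>))"
  proof -
  obtain B where B: "\<forall>\<epsilon> x y t. 0 < \<epsilon> \<and> \<epsilon> < 1 \<and> 0 \<le> t \<longrightarrow>
                   \<bar>apply_bcontfun (u \<epsilon> t) (x, y)\<bar> \<le> B \<and> \<bar>apply_bcontfun (v \<epsilon> t) (x, y)\<bar> \<le> B"
    using uv_bdd by blast
  obtain C where C: "\<forall>\<epsilon>. 0 < \<epsilon> \<and> \<epsilon> < 1 \<longrightarrow>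
                   integral (cbox (-pi, -pi) (pi, pi)) (\<lambda>p. \<bar>apply_bcontfun (\<rho>0 \<epsilon>) p\<bar>) \<le> C"
    using rho0_L1 by blast
  obtain \<phi>x \<phi>y R \<Phi> where \<phi>d: "\<And>z. (\<phi> has_derivative (\<lambda>h. fst h * \<phi>x z + snd h * \<phi>y z)) (at z)"
    and \<phi>c: "continuous_on UNIV \<phi>" and \<phi>xc: "continuous_on UNIV \<phi>x" and \<phi>yc: "continuous_on UNIV \<phi>y"
    and R: "R > 0"
    and supp: "\<And>z. \<phi> z \<noteq> 0 \<or> \<phi>x z \<noteq> 0 \<or> \<phi>y z \<noteq> 0 \<Longrightarrow> \<bar>fst z\<bar> \<le> R \<and> \<bar>snd z\<bar> \<le> R"
    and \<Phi>: "\<And>z. \<bar>\<phi> z\<bar> \<le> \<Phi> \<and> \<bar>\<phi>x z\<bar> \<le> \<Phi> \<and> \<bar>\<phi>y z\<bar> \<le> \<Phi>" and \<Phi>0: "\<Phi> \<ge> 0"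
    by (rule phi_facts[OF phi_smooth phi_supp]) blast
  have supp\<phi>: "\<And>z. \<phi> z \<noteq> 0 \<Longrightarrow> \<bar>fst z\<bar> \<le> R \<and> \<bar>snd z\<bar> \<le> R" using supp by blast
  define k where "k = nat \<lceil>2 * R / pi\<rceil>"
  have k: "4 * R \<le> 2 * pi * real k"
  proof -
    have "2 * R / pi \<le> real k" unfolding k_def by linarith
    then show ?thesis using pi_gt_zero by (simp add: field_simps)
  qed
  define M where "M = \<Phi> * real k ^ 2 * max C 0 + 1"
  have M0: "M > 0" unfolding M_def using \<Phi>0 by (simp add: add_nonneg_pos)
  have KM: "\<Phi> * (real k ^ 2 * max C 0) \<le> M" unfolding M_def by simp
  have main: "(let \<rho> = conv2 (apply_bcontfun (X \<epsilon> t)) (mollifier (\<epsilon> powr \<alpha>) \<phi>) in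
              \<bar>\<rho> (x, y)\<bar> \<le> M / \<epsilon> powr (2 * \<alpha>)
            \<and> (\<lambda>s. \<rho> (s, y)) differentiable (at x)
            \<and> \<bar>deriv (\<lambda>s. \<rho> (s, y)) x\<bar> \<le> M / \<epsilon> powr (3 * \<alpha>)
            \<and> (\<lambda>s. \<rho> (x, s)) differentiable (at y)
            \<and> \<bar>deriv (\<lambda>s. \<rho> (x, s)) y\<bar> \<le> M / \<epsilon> powr (3 * \<alpha>))"
    if e: "0 < \<epsilon>" "\<epsilon> < 1" and t: "0 \<le> t" for \<epsilon> x y t
  proof -
    define \<delta> where "\<delta> = \<epsilon> powr \<alpha>"
    have d1: "0 < \<delta>" unfolding \<delta>_def using e by simp
    have d2: "\<delta> \<le> 1" unfolding \<delta>_def by (rule powr_le1) (use e alpha in auto)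
    note d = d1 d2
    have p2: "\<epsilon> powr (2 * \<alpha>) = \<delta> ^ 2"
    proof -
      have "2 * \<alpha> = \<alpha> + \<alpha>" by simp
      then show ?thesis unfolding \<delta>_def by (simp only: powr_add power2_eq_square)
    qed
    have p3: "\<epsilon> powr (3 * \<alpha>) = \<delta> ^ 3"
    proof -
      have "3 * \<alpha> = \<alpha> + \<alpha> + \<alpha>" by simp
      then show ?thesis unfolding \<delta>_def by (simp only: powr_add power3_eq_cube)
    qed
    have Bd: "\<And>t p. 0 \<le> t \<Longrightarrow> \<bar>apply_bcontfun (u \<epsilon> t) p\<bar> \<le> B \<and> \<bar>apply_bcontfun (v \<epsilon> t) p\<bar> \<le> B"
    proof -
      fix t :: real and p :: "real \<times> real" assume "0 \<le> t"
      then have "\<bar>apply_bcontfun (u \<epsilon> t) (fst p, snd p)\<bar> \<le> B \<and> \<bar>apply_bcontfun (v \<epsilon> t) (fst p, snd p)\<bar> \<le> B"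
        using B e by blast
      then show "\<bar>apply_bcontfun (u \<epsilon> t) p\<bar> \<le> B \<and> \<bar>apply_bcontfun (v \<epsilon> t) p\<bar> \<le> B" by simp
    qed
    have Xd: "\<And>t. 0 \<le> t \<Longrightarrow> (X \<epsilon> has_vector_derivative X' \<epsilon> t) (at t within {0..})"
      by (rule X_deriv[OF e])
    have Xe: "\<And>t x y. 0 \<le> t \<Longrightarrow> apply_bcontfun (X' \<epsilon> t) (x, y) = upwind_rhs \<epsilon> (apply_bcontfun (X \<epsilon> t))
                     (apply_bcontfun (u \<epsilon> t)) (apply_bcontfun (v \<epsilon> t)) x y"
      by (rule X_eq[OF e])
    have up: "\<And>t. 0 \<le> t \<Longrightarrow> periodic2 (apply_bcontfun (u \<epsilon> t))" by (rule u_per[OF e])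
    have vp: "\<And>t. 0 \<le> t \<Longrightarrow> periodic2 (apply_bcontfun (v \<epsilon> t))" by (rule v_per[OF e])
    have X0p: "periodic2 (apply_bcontfun (X \<epsilon> 0))" using rho0_per[OF e] X_init[OF e] by simp
    have u1: "apply_bcontfun (u \<epsilon> t) (x + 2*pi, y + 0) = apply_bcontfun (u \<epsilon> t) (x, y)"
      "apply_bcontfun (u \<epsilon> t) (x + 0, y + 2*pi) = apply_bcontfun (u \<epsilon> t) (x, y)"
      if "0 \<le> t" for t x y using up[OF that] by (simp_all add: periodic2_def)
    have v1: "apply_bcontfun (v \<epsilon> t) (x + 2*pi, y + 0) = apply_bcontfun (v \<epsilon> t) (x, y)"
      "apply_bcontfun (v \<epsilon> t) (x + 0, y + 2*pi) = apply_bcontfun (v \<epsilon> t) (x, y)"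
      if "0 \<le> t" for t x y using vp[OF that] by (simp_all add: periodic2_def)
    have x1: "apply_bcontfun (X \<epsilon> 0) (x + 2*pi, y + 0) = apply_bcontfun (X \<epsilon> 0) (x, y)"
      "apply_bcontfun (X \<epsilon> 0) (x + 0, y + 2*pi) = apply_bcontfun (X \<epsilon> 0) (x, y)"
      for x y using X0p by (simp_all add: periodic2_def)
    have Xp: "periodic2 (apply_bcontfun (X \<epsilon> s))" if s: "0 \<le> s" for s
    proof -
      have "apply_bcontfun (X \<epsilon> s) (x + 2*pi, y + 0) = apply_bcontfun (X \<epsilon> s) (x, y)" for x y
        by (rule X_shift[OF e(1) Xd Xe Bd u1(1) v1(1) x1(1) s])
      moreover have "apply_bcontfun (X \<epsilon> s) (x + 0, y + 2*pi) = apply_bcontfun (X \<epsilon> s) (x, y)" for x y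
        by (rule X_shift[OF e(1) Xd Xe Bd u1(2) v1(2) x1(2) s])
      ultimately show ?thesis by (simp add: periodic2_def)
    qed
    define f where "f = apply_bcontfun (X \<epsilon> t)"
    have fc: "continuous_on UNIV f" by (simp add: f_def)
    have L1: "integral (cbox (-pi,-pi) (pi,pi)) (\<lambda>p. \<bar>f p\<bar>) \<le> max C 0"
    proof -
      have "integral (cbox (-pi,-pi) (pi,pi)) (\<lambda>p. \<bar>f p\<bar>)
          \<le> integral (cbox (-pi,-pi) (pi,pi)) (\<lambda>p. \<bar>apply_bcontfun (X \<epsilon> 0) p\<bar>)"
        unfolding f_def by (rule L1_decay[OF e(1) Xd Xe Bd up vp Xp t])
      also have "\<dots> \<le> C" using C e X_init[OF e] by simp
      finally show ?thesis by simp
    qed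
    define Bx where "Bx = cbox (x - 2*R, y - 2*R) (x + 2*R, y + 2*R)"
    have IB: "integral Bx (\<lambda>q. \<bar>f q\<bar>) \<le> real k ^ 2 * max C 0"
    proof -
      have "integral Bx (\<lambda>q. \<bar>f q\<bar>) \<le> real k ^ 2 * integral (cbox (-pi,-pi) (pi,pi)) (\<lambda>p. \<bar>f p\<bar>)"
        unfolding Bx_def
        by (rule box_bound[OF _ _ _ k]) (use Xp[OF t] in \<open>auto intro!: continuous_intros fc simp: f_def periodic2_def\<close>)
      also have "\<dots> \<le> real k ^ 2 * max C 0" using L1 by (intro mult_left_mono) auto
      finally show ?thesis .
    qed
    have IB0: "integral Bx (\<lambda>q. \<bar>f q\<bar>) \<ge> 0"
      by (rule Henstock_Kurzweil_Integration.integral_nonneg) (auto simp: Bx_def intro!: integrable_continuous continuous_intros fc[THEN continuous_on_subset])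
    have fin: "\<Phi> / \<delta> ^ n * integral Bx (\<lambda>q. \<bar>f q\<bar>) \<le> M / \<delta> ^ n" for n
    proof -
      have "\<Phi> * integral Bx (\<lambda>q. \<bar>f q\<bar>) \<le> \<Phi> * (real k ^ 2 * max C 0)" by (rule mult_left_mono[OF IB \<Phi>0])
      then have "\<Phi> * integral Bx (\<lambda>q. \<bar>f q\<bar>) \<le> M" using KM by linarith
      then show ?thesis using d by (simp add: divide_right_mono)
    qed
    define \<rho> where "\<rho> = conv2 f (mollifier \<delta> \<phi>)"
    have r1: "\<bar>\<rho> (x, y)\<bar> \<le> M / \<delta> ^ 2"
    proof -
      have "\<rho> (x, y) = integral Bx (\<lambda>q. f q * mollifier \<delta> \<phi> ((x, y) - q))"
        unfolding \<rho>_def Bx_def by (rule conv_repr[OF fc \<phi>c R supp\<phi> d]) (use R in auto)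
      also have "\<bar>\<dots>\<bar> \<le> \<Phi> / \<delta> ^ 2 * integral Bx (\<lambda>q. \<bar>f q\<bar>)"
        unfolding Bx_def
      proof (rule int_prod_bound[OF fc])
        show "continuous_on UNIV (\<lambda>q. mollifier \<delta> \<phi> ((x, y) - q))"
          by (intro cont_comp[OF moll_cont[OF \<phi>c]] continuous_intros)
        show "\<bar>mollifier \<delta> \<phi> ((x, y) - q)\<bar> \<le> \<Phi> / \<delta> ^ 2" for q
          using \<Phi> d by (simp add: mollifier_def abs_divide divide_right_mono)
      qed
      finally show ?thesis using fin[of 2] by linarith
    qed
    have dx: "((\<lambda>s. \<rho> (s, y)) has_field_derivative
      integral Bx (\<lambda>q. f q * (\<phi>x ((x - fst q)/\<delta>, (y - snd q)/\<delta>) / \<delta>^3))) (at x)"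
      unfolding \<rho>_def Bx_def by (rule conv_deriv_x[OF fc \<phi>c \<phi>xc \<phi>d R supp\<phi> d])
    have dy: "((\<lambda>s. \<rho> (x, s)) has_field_derivative
      integral Bx (\<lambda>q. f q * (\<phi>y ((x - fst q)/\<delta>, (y - snd q)/\<delta>) / \<delta>^3))) (at y)"
      unfolding \<rho>_def Bx_def by (rule conv_deriv_y[OF fc \<phi>c \<phi>yc \<phi>d R supp\<phi> d])
    have bx: "\<bar>integral Bx (\<lambda>q. f q * (\<phi>x ((x - fst q)/\<delta>, (y - snd q)/\<delta>) / \<delta>^3))\<bar> \<le> M / \<delta> ^ 3"
    proof -
      have "\<bar>integral Bx (\<lambda>q. f q * (\<phi>x ((x - fst q)/\<delta>, (y - snd q)/\<delta>) / \<delta>^3))\<bar> \<le> \<Phi> / \<delta> ^ 3 * integral Bx (\<lambda>q. \<bar>f q\<bar>)"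
        unfolding Bx_def
      proof (rule int_prod_bound[OF fc])
        show "continuous_on UNIV (\<lambda>q. \<phi>x ((x - fst q)/\<delta>, (y - snd q)/\<delta>) / \<delta>^3)"
          using d by (intro cont_comp[OF \<phi>xc] continuous_intros) auto
        show "\<bar>\<phi>x ((x - fst q)/\<delta>, (y - snd q)/\<delta>) / \<delta>^3\<bar> \<le> \<Phi> / \<delta> ^ 3" for q
          using \<Phi> d by (simp add: abs_divide divide_right_mono)
      qed
      then show ?thesis using fin[of 3] by linarith
    qed
    have by': "\<bar>integral Bx (\<lambda>q. f q * (\<phi>y ((x - fst q)/\<delta>, (y - snd q)/\<delta>) / \<delta>^3))\<bar> \<le> M / \<delta> ^ 3"
    proof -
      have "\<bar>integral Bx (\<lambda>q. f q * (\<phi>y ((x - fst q)/\<delta>, (y - snd q)/\<delta>) / \<delta>^3))\<bar> \<le> \<Phi> / \<delta> ^ 3 * integral Bx (\<lambda>q. \<bar>f q\<bar>)"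
        unfolding Bx_def
      proof (rule int_prod_bound[OF fc])
        show "continuous_on UNIV (\<lambda>q. \<phi>y ((x - fst q)/\<delta>, (y - snd q)/\<delta>) / \<delta>^3)"
          using d by (intro cont_comp[OF \<phi>yc] continuous_intros) auto
        show "\<bar>\<phi>y ((x - fst q)/\<delta>, (y - snd q)/\<delta>) / \<delta>^3\<bar> \<le> \<Phi> / \<delta> ^ 3" for q
          using \<Phi> d by (simp add: abs_divide divide_right_mono)
      qed
      then show ?thesis using fin[of 3] by linarith
    qed
    have "(\<lambda>s. \<rho> (s, y)) differentiable (at x)"
      using dx by (rule differentiableI[OF has_field_derivative_imp_has_derivative])
    moreover have "(\<lambda>s. \<rho> (x, s)) differentiable (at y)"
      using dy by (rule differentiableI[OF has_field_derivative_imp_has_derivative])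
    moreover have "\<bar>deriv (\<lambda>s. \<rho> (s, y)) x\<bar> \<le> M / \<delta> ^ 3" using DERIV_imp_deriv[OF dx] bx by simp
    moreover have "\<bar>deriv (\<lambda>s. \<rho> (x, s)) y\<bar> \<le> M / \<delta> ^ 3" using DERIV_imp_deriv[OF dy] by' by simp
    ultimately show ?thesis using r1 unfolding Let_def p2 p3 \<rho>_def f_def \<delta>_def by blast
  qed
  show ?thesis
  proof (intro exI[of _ M] conjI M0 allI impI)
    fix \<epsilon> x y t :: real assume a: "0 < \<epsilon> \<and> \<epsilon> < 1 \<and> 0 \<le> t"
    show "let \<rho> = conv2 (apply_bcontfun (X \<epsilon> t)) (mollifier (\<epsilon> powr \<alpha>) \<phi>) in
              \<bar>\<rho> (x, y)\<bar> \<le> M / \<epsilon> powr (2 * \<alpha>)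
            \<and> (\<lambda>s. \<rho> (s, y)) differentiable (at x)
            \<and> \<bar>deriv (\<lambda>s. \<rho> (s, y)) x\<bar> \<le> M / \<epsilon> powr (3 * \<alpha>)
            \<and> (\<lambda>s. \<rho> (x, s)) differentiable (at y)
            \<and> \<bar>deriv (\<lambda>s. \<rho> (x, s)) y\<bar> \<le> M / \<epsilon> powr (3 * \<alpha>)"
      using a by (intro main) auto
  qed
qed
end
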